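(* Fix $0<\alpha<1$, $r>0$. Let $\Pi$ be the exchangeable random partition of $\{1,2,\dots\}$ generated by sampling from a random discrete distribution whose ranked atom sizes have the $\textbf{PD}_\alpha^{(r)}$ distribution, and let $p(n_1,\dots,n_k)$ be its exchangeable partition probability function, i.e. $\mathbb{P}(\Pi_n=\{A_1,\dots,A_k\})=p(\#A_1,\dots,\#A_k)$ for each partition $\{A_1,\dots,A_k\}$ of $\{1,\dots,n\}$, where $\Pi_n$ is the restriction of $\Pi$ to $\{1,\dots,n\}$. Then, for positive integers $n_1,\dots,n_k$ with $\sum_i n_i=n$, $$ p(n_1,\dots,n_k)=r^{[k]}\int_0^\infty\!\!\cdots\!\int_0^\infty\int_0^\infty \frac{g_{r+k}(w)\prod_{i=1}^k\rho(x_i)x_i^{n_i}}{\big(w+\sum_{i=1}^k x_i\big)^n}\,dw\,dx_1\cdots dx_k $$ and $$ p(n_1,\dots,n_k)=\frac{\alpha^k r^{[k]}}{\Gamma(n)}\prod_{i=1}^k\Gamma(n_i-\alpha)\int_0^\infty\frac{\lambda^{k\alpha-1}}{\Psi(\lambda)^{r+k}}\prod_{i=1}^k G_{n_i-\alpha}(\lambda)\,d\lambda, $$ where $\rho(x)=\alpha x^{-\alpha-1}\mathbf 1_{\{0<x\le1\}}$, $r^{[k]}=r(r+1)\cdots(r+k-1)$, $\Psi(\lambda)=1+\alpha\int_0^1(1-e^{-\lambda x})x^{-\alpha-1}dx$, $G_{n_i-\alpha}(\lambda)=\frac{1}{\Gamma(n_i-\alpha)}\int_0^\lambda x^{n_i-\alpha-1}e^{-x}dx$,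 and $g_s$ ($s>0$) is the probability density on $(0,\infty)$ with Laplace transform $\int_0^\infty e^{-\lambda x}g_s(x)\,dx=\Psi(\lambda)^{-s}$.
   Context: Let $\Lambda(dx)=\rho(x)dx$. A negative binomial point process with parameter $r>0$ and measure $\Lambda$ is a random point measure $\mathbb{B}^{(r)}$ on $(0,\infty)$ with Laplace functional $\mathbb{E}\big(e^{-\mathbb{B}^{(r)}(f)}\big)=\big(1+\int(1-e^{-f})d\Lambda\big)^{-r}$. With points $J_1\ge J_2\ge\cdots$ and $T=\sum_iJ_i$, the $\textbf{PD}_\alpha^{(r)}$ distribution is the law of $(J_i/T)_{i\ge1}$ (for integer $r$ equivalently the law of the jumps $\Delta S_1^{(r+1)},\Delta S_1^{(r+2)},\dots$ of a driftless $\alpha$-stable subordinator with Lévy density $\alpha x^{-\alpha-1}$ on $[0,1]$, divided by $S_1$ minus its $r$ largest jumps). Sampling: given weights $(P_i)$, let $Y_i$ be i.i.d. diffuse labels independent of $(P_i)$ and $X_1,X_2,\dots$ conditionally i.i.d. with $\mathbb{P}(X_\ell=Y_i\mid\cdot)=P_i$; $\ell\sim\ell'$ in $\Pi$ iff $X_\ell=X_{\ell'}$. *)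

theory Defs
  imports "HOL-Probability.Probability"
begin

definition rhoPD :: "real \<Rightarrow> real \<Rightarrow> real" where
  "rhoPD \<alpha> x = (if 0 < x \<and> x \<le> 1 then \<alpha> * x powr (-\<alpha>-1) else 0)"

definition PsiPD :: "real \<Rightarrow> real \<Rightarrow> real" where
  "PsiPD \<alpha> lam = 1 + \<alpha> * (\<integral>x\<in>{0<..1}. (1 - exp (-lam*x)) * x powr (-\<alpha>-1) \<partial>lborel)"

definition Ginc :: "real \<Rightarrow> real \<Rightarrow> real" where
  "Ginc a lam = (\<integral>x\<in>{0..lam}. x powr (a-1) * exp (-x) \<partial>lborel) / Gamma a"

definition expneg :: "ennreal \<Rightarrow> real" where
  "expneg b = (if b = \<top> then 0 else exp (- enn2real b))"

text \<open>Right-hand side of the negative binomial Laplace functional: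
  (1 + int (1 - e^(-f)) d Lambda)^(-r), read as 0 if the integral is infinite.\<close>
definition NB_laplace :: "real \<Rightarrow> real \<Rightarrow> (real \<Rightarrow> real) \<Rightarrow> real" where
  "NB_laplace \<alpha> r f =
     (let L = (\<integral>\<^sup>+x. ennreal ((1 - exp (- f x)) * rhoPD \<alpha> x) \<partial>lborel)
      in if L = \<top> then 0 else (1 + enn2real L) powr (-r))"

definition induced_partition :: "nat \<Rightarrow> (nat \<Rightarrow> nat) \<Rightarrow> nat set set" where
  "induced_partition n x = {1..n} // {(l, l'). l \<in> {1..n} \<and> l' \<in> {1..n} \<and> x l = x l'}"

text \<open>Conditional probability, given the weights P (atom i has weight P i and
  carries a distinct label), that the partition of {1..n} generated by n
  conditionally i.i.d. samples equals pi.\<close>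
definition sample_partition_prob :: "(nat \<Rightarrow> real) \<Rightarrow> nat \<Rightarrow> nat set set \<Rightarrow> ennreal" where
  "sample_partition_prob P n \<pi> =
     (\<integral>\<^sup>+x. (\<Prod>l\<in>{1..n}. ennreal (P (x l))) * indicator {x. induced_partition n x = \<pi>} x
        \<partial>count_space ({1..n} \<rightarrow>\<^sub>E (UNIV :: nat set)))"

end

theory Submission
  imports Defs
begin


lemma rhoPD_meas[measurable]: "rhoPD a \<in> borel_measurable borel"
  unfolding rhoPD_def by measurable

lemma rhoPD_nonneg: "0 < a \<Longrightarrow> 0 \<le> rhoPD a x"
  unfolding rhoPD_def by auto

lemma nn_powr_01:
  fixes b :: real assumes "b > -1"
  shows "(\<integral>\<^sup>+x. ennreal (indicator {0<..1} x * x powr b) \<partial>lborel) = ennreal (1 / (b+1))"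
proof -
  have "(\<integral>\<^sup>+x. ennreal (indicator {0..1} x * x powr b) \<partial>lborel) = ennreal (1 powr (b+1) / (b+1))"
    using has_integral_powr_from_0[OF assms, of 1] by (intro nn_integral_has_integral_lebesgue) auto
  also have "(\<integral>\<^sup>+x. ennreal (indicator {0..1} x * x powr b) \<partial>lborel) =
     (\<integral>\<^sup>+x. ennreal (indicator {0<..1} x * x powr b) \<partial>lborel)"
    by (rule nn_integral_cong) (auto simp: indicator_def)
  finally show ?thesis by simp
qed

lemma integrable_x_rho:
  assumes "0 < a" "a < 1"
  shows "integrable lborel (\<lambda>x. x * rhoPD a x)"
proof (rule integrableI_nonneg)
  show "(\<lambda>x. x * rhoPD a x) \<in> borel_measurable lborel" by measurable
  show "AE x in lborel. 0 \<le> x * rhoPD a x" using assms by (auto simp: rhoPD_def)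
  have "(\<integral>\<^sup>+x. ennreal (x * rhoPD a x) \<partial>lborel) = (\<integral>\<^sup>+x. ennreal a * ennreal (indicator {0<..1} x * x powr (-a)) \<partial>lborel)"
    using assms by (intro nn_integral_cong) (auto simp: rhoPD_def indicator_def ennreal_mult[symmetric] powr_add[symmetric] powr_mult_base)
  also have "\<dots> = ennreal a * ennreal (1 / (-a+1))"
    using assms by (subst nn_integral_cmult) (auto simp: nn_powr_01)
  finally show "(\<integral>\<^sup>+x. ennreal (x * rhoPD a x) \<partial>lborel) < \<infinity>" by (simp add: ennreal_mult_less_top)
qed



definition Inj :: "nat \<Rightarrow> (nat \<Rightarrow> nat) set" where
  "Inj k = {\<sigma> \<in> {..<k} \<rightarrow>\<^sub>E (UNIV::nat set). inj_on \<sigma> {..<k}}"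

definition SW :: "nat \<Rightarrow> (nat \<Rightarrow> nat \<Rightarrow> ennreal) \<Rightarrow> ennreal" where
  "SW k W = (\<integral>\<^sup>+\<sigma>. (\<Prod>j<k. W j (\<sigma> j)) \<partial>count_space (Inj k))"

lemma countable_Inj: "countable (Inj k)"
proof -
  have "countable ({..<k} \<rightarrow>\<^sub>E (UNIV::nat set))" by (rule countable_PiE) auto
  then show ?thesis unfolding Inj_def by (rule countable_subset[rotated]) auto
qed

lemma Inj_0: "Inj 0 = {\<lambda>_. undefined}"
  unfolding Inj_def by auto

lemma SW_0: "SW 0 W = 1"
  unfolding SW_def Inj_0 by (simp add: nn_integral_count_space_finite)

lemma bij_Inj_Suc:
  "bij_betw (\<lambda>(\<sigma>, i). \<sigma>(k := i)) {(\<sigma>, i). \<sigma> \<in> Inj k \<and> i \<notin> \<sigma> ` {..<k}} (Inj (Suc k))"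
  by (rule bij_betwI[where g="\<lambda>\<tau>. (\<tau>(k := undefined), \<tau> k)"])
     (auto simp: Inj_def PiE_def extensional_def lessThan_Suc inj_on_def)

lemma SW_Suc:
  "(\<Sum>i. W k i) * SW k W = SW (Suc k) W + (\<Sum>j<k. SW k (W(j := (\<lambda>i. W j i * W k i))))"
proof -
  let ?I = "Inj k"
  define \<phi> where "\<phi> \<sigma> i = (\<Prod>j<k. W j (\<sigma> j)) * W k i" for \<sigma> i
  have "(\<Sum>i. W k i) * SW k W = (\<integral>\<^sup>+\<sigma>. (\<integral>\<^sup>+i. \<phi> \<sigma> i \<partial>count_space UNIV) \<partial>count_space ?I)"
    unfolding SW_def \<phi>_def nn_integral_count_space_nat
    by (simp add: nn_integral_cmult mult.commute)
  also have "\<dots> = (\<integral>\<^sup>+\<sigma>. (\<integral>\<^sup>+i. \<phi> \<sigma> i * indicator (- (\<sigma> ` {..<k})) i \<partial>count_space UNIV)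
       + (\<Sum>j<k. (\<Prod>l<k. (W(j := (\<lambda>i. W j i * W k i))) l (\<sigma> l))) \<partial>count_space ?I)"
  proof (rule nn_integral_cong)
    fix \<sigma> assume "\<sigma> \<in> space (count_space ?I)"
    then have inj: "inj_on \<sigma> {..<k}" by (auto simp: Inj_def)
    have "(\<integral>\<^sup>+i. \<phi> \<sigma> i \<partial>count_space UNIV) = (\<integral>\<^sup>+i. \<phi> \<sigma> i * indicator (- (\<sigma> ` {..<k})) i
         + \<phi> \<sigma> i * indicator (\<sigma> ` {..<k}) i \<partial>count_space UNIV)"
      by (intro nn_integral_cong) (auto simp: indicator_def)
    also have "\<dots> = (\<integral>\<^sup>+i. \<phi> \<sigma> i * indicator (- (\<sigma> ` {..<k})) i \<partial>count_space UNIV)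
         + (\<integral>\<^sup>+i. \<phi> \<sigma> i * indicator (\<sigma> ` {..<k}) i \<partial>count_space UNIV)"
      by (rule nn_integral_add) auto
    also have "(\<integral>\<^sup>+i. \<phi> \<sigma> i * indicator (\<sigma> ` {..<k}) i \<partial>count_space UNIV) = (\<Sum>i\<in>\<sigma> ` {..<k}. \<phi> \<sigma> i)"
      by (subst nn_integral_count_space_indicator[symmetric]) (auto simp: nn_integral_count_space_finite)
    also have "\<dots> = (\<Sum>j<k. \<phi> \<sigma> (\<sigma> j))"
      using inj by (subst sum.reindex) auto
    also have "\<dots> = (\<Sum>j<k. (\<Prod>l<k. (W(j := (\<lambda>i. W j i * W k i))) l (\<sigma> l)))"
    proof (rule sum.cong)
      fix j assume j: "j \<in> {..<k}"
      have "(\<Prod>l<k. (W(j := (\<lambda>i. W j i * W k i))) l (\<sigma> l)) =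
          (W j (\<sigma> j) * W k (\<sigma> j)) * (\<Prod>l\<in>{..<k}-{j}. W l (\<sigma> l))"
        using j by (subst prod.remove[of _ j]) (auto intro!: prod.cong)
      also have "\<dots> = \<phi> \<sigma> (\<sigma> j)"
        using j unfolding \<phi>_def by (subst prod.remove[of _ j]) (auto simp: ac_simps)
      finally show "\<phi> \<sigma> (\<sigma> j) = (\<Prod>l<k. (W(j := (\<lambda>i. W j i * W k i))) l (\<sigma> l))" by simp
    qed simp
    finally show "(\<integral>\<^sup>+i. \<phi> \<sigma> i \<partial>count_space UNIV) = (\<integral>\<^sup>+i. \<phi> \<sigma> i * indicator (- (\<sigma> ` {..<k})) i \<partial>count_space UNIV)
       + (\<Sum>j<k. (\<Prod>l<k. (W(j := (\<lambda>i. W j i * W k i))) l (\<sigma> l)))" .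
  qed
  also have "\<dots> = (\<integral>\<^sup>+\<sigma>. (\<integral>\<^sup>+i. \<phi> \<sigma> i * indicator (- (\<sigma> ` {..<k})) i \<partial>count_space UNIV) \<partial>count_space ?I)
      + (\<Sum>j<k. SW k (W(j := (\<lambda>i. W j i * W k i))))"
    unfolding SW_def by (subst nn_integral_add) (auto simp: nn_integral_sum)
  also have "(\<integral>\<^sup>+\<sigma>. (\<integral>\<^sup>+i. \<phi> \<sigma> i * indicator (- (\<sigma> ` {..<k})) i \<partial>count_space UNIV) \<partial>count_space ?I)
      = SW (Suc k) W"
  proof -
    interpret P: pair_sigma_finite "count_space ?I" "count_space (UNIV::nat set)"
      by (intro pair_sigma_finite.intro sigma_finite_measure_count_space_countable countable_Inj) auto
    have "(\<integral>\<^sup>+\<sigma>. (\<integral>\<^sup>+i. \<phi> \<sigma> i * indicator (- (\<sigma> ` {..<k})) i \<partial>count_space UNIV) \<partial>count_space ?I)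
       = (\<integral>\<^sup>+p. \<phi> (fst p) (snd p) * indicator (- (fst p ` {..<k})) (snd p) \<partial>(count_space ?I \<Otimes>\<^sub>M count_space UNIV))"
    proof -
      have meas: "(\<lambda>p. \<phi> (fst p) (snd p) * indicator (- (fst p ` {..<k})) (snd p)) \<in> borel_measurable (count_space ?I \<Otimes>\<^sub>M count_space UNIV)"
        by (simp add: pair_measure_countable countable_Inj)
      show ?thesis using P.M2.nn_integral_fst[OF meas] by simp
    qed
    also have "\<dots> = (\<integral>\<^sup>+p. \<phi> (fst p) (snd p) * indicator (- (fst p ` {..<k})) (snd p) \<partial>count_space (?I \<times> UNIV))"
      by (simp add: pair_measure_countable countable_Inj)
    also have "\<dots> = (\<integral>\<^sup>+p. \<phi> (fst p) (snd p) \<partial>count_space {(\<sigma>, i). \<sigma> \<in> Inj k \<and> i \<notin> \<sigma> ` {..<k}})"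
      by (subst (1 2) nn_integral_count_space_indicator) (auto intro!: nn_integral_cong simp: indicator_def)
    also have "\<dots> = (\<integral>\<^sup>+p. (\<lambda>\<tau>. \<Prod>j<Suc k. W j (\<tau> j)) ((\<lambda>(\<sigma>, i). \<sigma>(k := i)) p) \<partial>count_space {(\<sigma>, i). \<sigma> \<in> Inj k \<and> i \<notin> \<sigma> ` {..<k}})"
      unfolding \<phi>_def by (intro nn_integral_cong) (auto simp: lessThan_Suc mult.commute intro!: prod.cong)
    also have "\<dots> = SW (Suc k) W"
      unfolding SW_def by (rule nn_integral_bij_count_space[OF bij_Inj_Suc])
    finally show ?thesis .
  qed
  finally show ?thesis .
qed



locale blocks =
  fixes n k :: nat and A :: "nat \<Rightarrow> nat set"
  assumes A_ne: "\<And>i. i < k \<Longrightarrow> A i \<noteq> {}"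
    and A_disj: "\<And>i j. i < k \<Longrightarrow> j < k \<Longrightarrow> i \<noteq> j \<Longrightarrow> A i \<inter> A j = {}"
    and A_cover: "(\<Union>i<k. A i) = {1..n}"
begin

definition blk :: "nat \<Rightarrow> nat" where "blk l = (THE j. j < k \<and> l \<in> A j)"

lemma A_sub: "j < k \<Longrightarrow> A j \<subseteq> {1..n}"
  using A_cover by auto

lemma A_sub': "j < k \<Longrightarrow> l \<in> A j \<Longrightarrow> l \<in> {1..n}"
  using A_sub by blast

lemma finite_A: "j < k \<Longrightarrow> finite (A j)"
  using A_sub finite_subset by blast

lemma blk_unique: "j < k \<Longrightarrow> l \<in> A j \<Longrightarrow> blk l = j"
  unfolding blk_def using A_disj by (intro the_equality) blast+

lemma blk: "l \<in> {1..n} \<Longrightarrow> blk l < k \<and> l \<in> A (blk l)"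
proof -
  assume "l \<in> {1..n}"
  then have "l \<in> (\<Union>i<k. A i)" using A_cover by simp
  then obtain j where "j < k" "l \<in> A j" by blast
  then show ?thesis using blk_unique by auto
qed

definition gmap :: "(nat \<Rightarrow> nat) \<Rightarrow> nat \<Rightarrow> nat" where
  "gmap \<sigma> = (\<lambda>l. if l \<in> {1..n} then \<sigma> (blk l) else undefined)"

lemma partition_char:
  assumes x: "\<And>l l'. l \<in> {1..n} \<Longrightarrow> l' \<in> {1..n} \<Longrightarrow> x l = x l' \<longleftrightarrow> blk l = blk l'"
  shows "induced_partition n x = A ` {..<k}"
proof -
  let ?R = "{(l, l'). l \<in> {1..n} \<and> l' \<in> {1..n} \<and> x l = x l'}"
  have cls: "?R `` {l} = A (blk l)" if "l \<in> {1..n}" for l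
  proof -
    have "?R `` {l} = {l' \<in> {1..n}. blk l' = blk l}" using x that by auto
    also have "\<dots> = A (blk l)"
    proof (intro equalityI subsetI)
      fix l' assume "l' \<in> {l' \<in> {1..n}. blk l' = blk l}"
      then show "l' \<in> A (blk l)" using blk[of l'] by auto
    next
      fix l' assume l': "l' \<in> A (blk l)"
      have bl: "blk l < k" using blk[OF that] by simp
      then have "l' \<in> {1..n}" using A_sub' l' by blast
      moreover have "blk l' = blk l" using blk_unique[OF bl l'] .
      ultimately show "l' \<in> {l' \<in> {1..n}. blk l' = blk l}" by simp
    qed
    finally show ?thesis .
  qed
  have "induced_partition n x = (\<Union>l\<in>{1..n}. {?R `` {l}})"
    unfolding induced_partition_def quotient_def by simp
  also have "\<dots> = (\<Union>l\<in>{1..n}. {A (blk l)})" using cls by auto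
  also have "\<dots> = A ` {..<k}"
  proof (intro equalityI subsetI)
    fix B assume "B \<in> (\<Union>l\<in>{1..n}. {A (blk l)})"
    then show "B \<in> A ` {..<k}" using blk by auto
  next
    fix B assume "B \<in> A ` {..<k}"
    then obtain j where j: "j < k" "B = A j" by auto
    then obtain l where "l \<in> A j" using A_ne by auto
    then show "B \<in> (\<Union>l\<in>{1..n}. {A (blk l)})" using j blk_unique A_sub by force
  qed
  finally show ?thesis .
qed

lemma partition_char_inv:
  assumes "induced_partition n x = A ` {..<k}" "l \<in> {1..n}" "l' \<in> {1..n}"
  shows "x l = x l' \<longleftrightarrow> blk l = blk l'"
proof -
  let ?R = "{(l, l'). l \<in> {1..n} \<and> l' \<in> {1..n} \<and> x l = x l'}"
  have cls: "?R `` {l} = A (blk l)" if l: "l \<in> {1..n}" for l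
  proof -
    have "?R `` {l} \<in> induced_partition n x"
      unfolding induced_partition_def quotient_def using l by auto
    then obtain j where j: "j < k" "?R `` {l} = A j" using assms(1) by auto
    have "l \<in> ?R `` {l}" using l by auto
    then have "blk l = j" using j blk_unique by auto
    then show ?thesis using j by simp
  qed
  have "x l = x l' \<longleftrightarrow> l' \<in> ?R `` {l}" using assms by auto
  also have "\<dots> \<longleftrightarrow> l' \<in> A (blk l)" using cls assms by auto
  also have "\<dots> \<longleftrightarrow> blk l = blk l'"
  proof
    assume "l' \<in> A (blk l)" then show "blk l = blk l'" using blk_unique blk[OF assms(2)] by metis
  next
    assume "blk l = blk l'" then show "l' \<in> A (blk l)" using blk[OF assms(3)] by simp
  qed
  finally show ?thesis .
qed

lemma bij_gmap:
  "bij_betw gmap (Inj k) {x \<in> {1..n} \<rightarrow>\<^sub>E (UNIV::nat set). induced_partition n x = A ` {..<k}}"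
proof -
  define rep where "rep j = (SOME l. l \<in> A j)" for j
  have rep: "j < k \<Longrightarrow> rep j \<in> A j" for j using A_ne unfolding rep_def by (meson ex_in_conv someI_ex)
  have rep_blk: "j < k \<Longrightarrow> blk (rep j) = j" for j using rep blk_unique by auto
  have rep_n: "j < k \<Longrightarrow> rep j \<in> {1..n}" for j using rep A_sub' by blast
  show ?thesis
  proof (rule bij_betwI[where g="\<lambda>x. \<lambda>j\<in>{..<k}. x (rep j)"])
    show "gmap \<in> Inj k \<rightarrow> {x \<in> {1..n} \<rightarrow>\<^sub>E UNIV. induced_partition n x = A ` {..<k}}"
    proof
      fix \<sigma> assume s: "\<sigma> \<in> Inj k"
      have "induced_partition n (gmap \<sigma>) = A ` {..<k}"
        using s blk by (intro partition_char) (auto simp: gmap_def Inj_def inj_on_def)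
      then show "gmap \<sigma> \<in> {x \<in> {1..n} \<rightarrow>\<^sub>E UNIV. induced_partition n x = A ` {..<k}}"
        by (auto simp: gmap_def)
    qed
    show "(\<lambda>x. \<lambda>j\<in>{..<k}. x (rep j)) \<in> {x \<in> {1..n} \<rightarrow>\<^sub>E UNIV. induced_partition n x = A ` {..<k}} \<rightarrow> Inj k"
    proof
      fix x assume x: "x \<in> {x \<in> {1..n} \<rightarrow>\<^sub>E UNIV. induced_partition n x = A ` {..<k}}"
      have "inj_on (\<lambda>j. x (rep j)) {..<k}"
      proof (rule inj_onI)
        fix i j assume ij: "i \<in> {..<k}" "j \<in> {..<k}" "x (rep i) = x (rep j)"
        then have "blk (rep i) = blk (rep j)"
          using partition_char_inv[of x "rep i" "rep j"] x rep_n by auto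
        then show "i = j" using rep_blk ij by simp
      qed
      then show "(\<lambda>j\<in>{..<k}. x (rep j)) \<in> Inj k" unfolding Inj_def
        by (auto simp: inj_on_def)
    qed
    show "(\<lambda>j\<in>{..<k}. gmap \<sigma> (rep j)) = \<sigma>" if "\<sigma> \<in> Inj k" for \<sigma>
    proof
      fix j show "(\<lambda>j\<in>{..<k}. gmap \<sigma> (rep j)) j = \<sigma> j"
        using that rep_n rep_blk by (cases "j < k") (auto simp: gmap_def Inj_def PiE_def extensional_def)
    qed
    show "gmap (\<lambda>j\<in>{..<k}. x (rep j)) = x" if x: "x \<in> {x \<in> {1..n} \<rightarrow>\<^sub>E UNIV. induced_partition n x = A ` {..<k}}" for x
    proof
      fix l show "gmap (\<lambda>j\<in>{..<k}. x (rep j)) l = x l"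
      proof (cases "l \<in> {1..n}")
        case True
        then show ?thesis using x partition_char_inv[of x "rep (blk l)" l] blk[OF True] rep_n rep_blk
          by (auto simp: gmap_def)
      next
        case False then show ?thesis using x by (auto simp: gmap_def PiE_def extensional_def)
      qed
    qed
  qed
qed

lemma spp_Inj:
  "sample_partition_prob P n (A ` {..<k}) = (\<integral>\<^sup>+\<sigma>. (\<Prod>j<k. ennreal (P (\<sigma> j)) ^ card (A j)) \<partial>count_space (Inj k))"
proof -
  let ?X = "{x \<in> {1..n} \<rightarrow>\<^sub>E (UNIV::nat set). induced_partition n x = A ` {..<k}}"
  have "sample_partition_prob P n (A ` {..<k}) = (\<integral>\<^sup>+x. (\<Prod>l\<in>{1..n}. ennreal (P (x l))) \<partial>count_space ?X)"
    unfolding sample_partition_prob_def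
    by (subst (1 2) nn_integral_count_space_indicator) (auto intro!: nn_integral_cong simp: indicator_def)
  also have "\<dots> = (\<integral>\<^sup>+\<sigma>. (\<Prod>l\<in>{1..n}. ennreal (P (gmap \<sigma> l))) \<partial>count_space (Inj k))"
    by (rule nn_integral_bij_count_space[OF bij_gmap, symmetric])
  also have "\<dots> = (\<integral>\<^sup>+\<sigma>. (\<Prod>j<k. ennreal (P (\<sigma> j)) ^ card (A j)) \<partial>count_space (Inj k))"
  proof (rule nn_integral_cong)
    fix \<sigma>
    have "(\<Prod>l\<in>{1..n}. ennreal (P (gmap \<sigma> l))) = (\<Prod>l\<in>(\<Union>j<k. A j). ennreal (P (gmap \<sigma> l)))"
      using A_cover by simp
    also have "\<dots> = (\<Prod>j<k. \<Prod>l\<in>A j. ennreal (P (gmap \<sigma> l)))"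
      by (rule prod.UNION_disjoint) (auto simp: finite_A A_disj)
    also have "\<dots> = (\<Prod>j<k. ennreal (P (\<sigma> j)) ^ card (A j))"
    proof (rule prod.cong)
      fix j assume j: "j \<in> {..<k}"
      have "(\<Prod>l\<in>A j. ennreal (P (gmap \<sigma> l))) = (\<Prod>l\<in>A j. ennreal (P (\<sigma> j)))"
        using j A_sub' blk_unique by (intro prod.cong) (auto simp: gmap_def simp del: atLeastAtMost_iff)
      then show "(\<Prod>l\<in>A j. ennreal (P (gmap \<sigma> l))) = ennreal (P (\<sigma> j)) ^ card (A j)" by simp
    qed simp
    finally show "(\<Prod>l\<in>{1..n}. ennreal (P (gmap \<sigma> l))) = (\<Prod>j<k. ennreal (P (\<sigma> j)) ^ card (A j))" .
  qed
  finally show ?thesis .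
qed

lemma sum_card: "(\<Sum>j<k. card (A j)) = n"
proof -
  have "card (\<Union>j<k. A j) = (\<Sum>j<k. card (A j))"
    by (rule card_UN_disjoint) (auto simp: finite_A A_disj)
  then show ?thesis using A_cover by simp
qed

lemma card_pos: "j < k \<Longrightarrow> 0 < card (A j)"
  using A_ne finite_A by (simp add: card_gt_0_iff)

end



lemma expneg_meas[measurable]: "expneg \<in> borel_measurable borel"
  unfolding expneg_def[abs_def] by measurable

lemma expneg_range: "0 \<le> expneg b" "expneg b \<le> 1"
  unfolding expneg_def by auto

lemma expneg_eq_1: "expneg b = 1 \<longleftrightarrow> b = 0"
  unfolding expneg_def by (auto simp: enn2real_eq_0_iff)

lemma expneg_add:
  assumes "c \<noteq> \<top>" shows "expneg (b + c) = expneg b * exp (- enn2real c)"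
  using assms unfolding expneg_def
  by (cases "b = \<top>") (auto simp: enn2real_plus less_top exp_add[symmetric])

lemma one_minus_exp_le: "1 - exp (- y) \<le> (y::real)"
  using exp_ge_add_one_self[of "-y"] by simp

locale NB = prob_space M for M :: "'a measure" +
  fixes \<alpha> r :: real and J :: "'a \<Rightarrow> nat \<Rightarrow> real"
  assumes alpha: "0 < \<alpha>" "\<alpha> < 1" and r: "0 < r"
    and J_meas[measurable]: "\<And>i. (\<lambda>\<omega>. J \<omega> i) \<in> borel_measurable M"
    and J_ranked: "AE \<omega> in M. decseq (J \<omega>) \<and> (\<forall>i. 0 < J \<omega> i) \<and> summable (J \<omega>)"
    and J_NB: "\<And>f. f \<in> borel_measurable borel \<Longrightarrow> (\<forall>x. 0 \<le> f x) \<Longrightarrow>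
        (\<integral>\<^sup>+\<omega>. ennreal (expneg (\<Sum>i. ennreal (f (J \<omega> i)))) \<partial>M) = ennreal (NB_laplace \<alpha> r f)"
begin

definition "rho = rhoPD \<alpha>"
definition "adm_f (f::real\<Rightarrow>real) \<longleftrightarrow> f \<in> borel_measurable borel \<and> (\<forall>x. 0 \<le> f x) \<and> (\<exists>c. \<forall>x. 0 < x \<longrightarrow> x \<le> 1 \<longrightarrow> f x \<le> c * x)"
definition "adm_h (h::real\<Rightarrow>real) \<longleftrightarrow> h \<in> borel_measurable borel \<and> (\<forall>x. 0 \<le> h x) \<and> (\<forall>x. 0 < x \<longrightarrow> x \<le> 1 \<longrightarrow> h x \<le> x)"
definition "Phi (f::real\<Rightarrow>real) = 1 + (LINT x|lborel. (1 - exp (- f x)) * rho x)"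
definition "Dn (f::real\<Rightarrow>real) (h::real\<Rightarrow>real) = (LINT x|lborel. exp (- f x) * h x * rho x)"
definition "Nf (f::real\<Rightarrow>real) \<omega> = (\<Sum>i. ennreal (f (J \<omega> i)))"
definition "Xp (f::real\<Rightarrow>real) \<omega> = expneg (Nf f \<omega>)"
definition "S k (h::nat\<Rightarrow>real\<Rightarrow>real) \<omega> = SW k (\<lambda>j i. ennreal (h j (J \<omega> i)))"
definition "F k f h = (\<integral>\<^sup>+\<omega>. ennreal (Xp f \<omega>) * S k h \<omega> \<partial>M)"
definition "C k (f::real\<Rightarrow>real) (h::nat\<Rightarrow>real\<Rightarrow>real) = pochhammer r k * Phi f powr (- (r + real k)) * (\<Prod>j<k. Dn f (h j))"
definition "Gd \<omega> \<longleftrightarrow> (\<forall>i. 0 < J \<omega> i \<and> J \<omega> i \<le> 1) \<and> summable (J \<omega>)"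

lemma rho_meas[measurable]: "rho \<in> borel_measurable borel"
  unfolding rho_def by measurable

lemma rho_nonneg: "0 \<le> rho x"
  unfolding rho_def using alpha(1) by (rule rhoPD_nonneg)

lemma rho_supp: "rho x \<noteq> 0 \<Longrightarrow> 0 < x \<and> x \<le> 1"
  unfolding rho_def rhoPD_def by (auto split: if_splits)

lemma int_xrho: "integrable lborel (\<lambda>x. x * rho x)"
  unfolding rho_def using alpha by (rule integrable_x_rho)

lemma adm_fD:
  assumes "adm_f f"
  shows "f \<in> borel_measurable borel" "\<And>x. 0 \<le> f x" "\<exists>c\<ge>0. \<forall>x. 0 < x \<longrightarrow> x \<le> 1 \<longrightarrow> f x \<le> c * x"
proof -
  show "f \<in> borel_measurable borel" "\<And>x. 0 \<le> f x" using assms by (auto simp: adm_f_def)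
  obtain c where c: "\<forall>x. 0 < x \<longrightarrow> x \<le> 1 \<longrightarrow> f x \<le> c * x" using assms by (auto simp: adm_f_def)
  moreover have "0 \<le> c"
  proof -
    have "f 1 \<le> c" using c[rule_format, of 1] by simp
    moreover have "0 \<le> f 1" using assms by (auto simp: adm_f_def)
    ultimately show ?thesis by linarith
  qed
  ultimately show "\<exists>c\<ge>0. \<forall>x. 0 < x \<longrightarrow> x \<le> 1 \<longrightarrow> f x \<le> c * x" by blast
qed

lemma adm_hD:
  assumes "adm_h h"
  shows "h \<in> borel_measurable borel" "\<And>x. 0 \<le> h x" "\<And>x. 0 < x \<Longrightarrow> x \<le> 1 \<Longrightarrow> h x \<le> x"
  using assms by (auto simp: adm_h_def)

lemma int_Phi:
  assumes "adm_f f" shows "integrable lborel (\<lambda>x. (1 - exp (- f x)) * rho x)"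
proof -
  obtain c where c: "c \<ge> 0" "\<And>x. 0 < x \<Longrightarrow> x \<le> 1 \<Longrightarrow> f x \<le> c * x" using adm_fD(3)[OF assms] by auto
  note [measurable] = adm_fD(1)[OF assms]
  show ?thesis
  proof (rule Bochner_Integration.integrable_bound)
    show "integrable lborel (\<lambda>x. c * (x * rho x))" using int_xrho by simp
    show "(\<lambda>x. (1 - exp (- f x)) * rho x) \<in> borel_measurable lborel" by measurable
    show "AE x in lborel. norm ((1 - exp (- f x)) * rho x) \<le> norm (c * (x * rho x))"
    proof (rule AE_I2)
      fix x
      show "norm ((1 - exp (- f x)) * rho x) \<le> norm (c * (x * rho x))"
      proof (cases "rho x = 0")
        case False
        then have x: "0 < x" "x \<le> 1" using rho_supp by auto
        have "0 \<le> 1 - exp (- f x)" using adm_fD(2)[OF assms, of x] by simp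
        moreover have "1 - exp (- f x) \<le> c * x" using one_minus_exp_le[of "f x"] c(2)[OF x] by simp
        ultimately have "(1 - exp (- f x)) * rho x \<le> (c * x) * rho x" "0 \<le> (1 - exp (- f x)) * rho x"
          using rho_nonneg[of x] by (auto intro: mult_right_mono)
        then show ?thesis using rho_nonneg[of x] x c(1) by (simp add: abs_mult)
      qed simp
    qed
  qed
qed

lemma int_Dn:
  assumes "adm_f f" "adm_h h" shows "integrable lborel (\<lambda>x. exp (- f x) * h x * rho x)"
proof -
  note [measurable] = adm_fD(1)[OF assms(1)] adm_hD(1)[OF assms(2)]
  show ?thesis
  proof (rule Bochner_Integration.integrable_bound)
    show "integrable lborel (\<lambda>x. x * rho x)" using int_xrho by simp
    show "(\<lambda>x. exp (- f x) * h x * rho x) \<in> borel_measurable lborel" by measurable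
    show "AE x in lborel. norm (exp (- f x) * h x * rho x) \<le> norm (x * rho x)"
    proof (rule AE_I2)
      fix x
      show "norm (exp (- f x) * h x * rho x) \<le> norm (x * rho x)"
      proof (cases "rho x = 0")
        case False
        then have x: "0 < x" "x \<le> 1" using rho_supp by auto
        have e: "exp (- f x) \<le> 1" "0 \<le> exp (- f x)" using adm_fD(2)[OF assms(1), of x] by auto
        have hx: "0 \<le> h x" "h x \<le> x" using adm_hD(2)[OF assms(2)] adm_hD(3)[OF assms(2) x] by auto
        have "exp (- f x) * h x \<le> 1 * x" using e hx by (intro mult_mono) auto
        then have "exp (- f x) * h x * rho x \<le> x * rho x" "0 \<le> exp (- f x) * h x * rho x"
          using rho_nonneg[of x] e hx by (auto intro: mult_right_mono)
        then show ?thesis using rho_nonneg[of x] x by (simp add: abs_mult)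
      qed simp
    qed
  qed
qed

lemma one_exp_f: "adm_f f \<Longrightarrow> 0 \<le> 1 - exp (- f x)"
proof -
  assume "adm_f f"
  then have "0 \<le> f x" by (rule adm_fD(2))
  then have "exp (- f x) \<le> 1" by simp
  then show ?thesis by simp
qed

lemma Phi_ge1: "adm_f f \<Longrightarrow> 1 \<le> Phi f"
  unfolding Phi_def using one_exp_f rho_nonneg
  by (auto intro!: integral_nonneg_AE AE_I2 mult_nonneg_nonneg)

lemma Dn_nonneg: "adm_f f \<Longrightarrow> adm_h h \<Longrightarrow> 0 \<le> Dn f h"
  unfolding Dn_def using adm_hD(2) rho_nonneg
  by (auto intro!: integral_nonneg_AE AE_I2 mult_nonneg_nonneg)

lemma NB_Phi:
  assumes "adm_f f" shows "NB_laplace \<alpha> r f = Phi f powr (- r)"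
proof -
  note [measurable] = adm_fD(1)[OF assms]
  have "(\<integral>\<^sup>+x. ennreal ((1 - exp (- f x)) * rhoPD \<alpha> x) \<partial>lborel) = ennreal (LINT x|lborel. (1 - exp (- f x)) * rho x)"
    unfolding rho_def[symmetric] using int_Phi[OF assms] one_exp_f[OF assms] rho_nonneg
    by (intro nn_integral_eq_integral) (auto intro!: AE_I2 mult_nonneg_nonneg)
  moreover have "0 \<le> (LINT x|lborel. (1 - exp (- f x)) * rho x)"
    using one_exp_f[OF assms] rho_nonneg by (auto intro!: integral_nonneg_AE AE_I2 mult_nonneg_nonneg)
  ultimately show ?thesis unfolding NB_laplace_def Phi_def Let_def by simp
qed

lemma C_nonneg: "adm_f f \<Longrightarrow> (\<And>j. j < k \<Longrightarrow> adm_h (h j)) \<Longrightarrow> 0 \<le> C k f h"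
  unfolding C_def using r
  by (auto intro!: mult_nonneg_nonneg prod_nonneg Dn_nonneg pochhammer_nonneg)

lemma Nf_meas[measurable]: assumes [measurable]: "f \<in> borel_measurable borel" shows "Nf f \<in> borel_measurable M"
  unfolding Nf_def[abs_def] by measurable

lemma Xp_meas[measurable]: assumes [measurable]: "f \<in> borel_measurable borel" shows "Xp f \<in> borel_measurable M"
  unfolding Xp_def[abs_def] by measurable

lemma S_meas[measurable]:
  assumes "\<And>j. j < k \<Longrightarrow> h j \<in> borel_measurable borel" shows "S k h \<in> borel_measurable M"
proof -
  interpret I: sigma_finite_measure "count_space (Inj k)"
    by (intro sigma_finite_measure_count_space_countable countable_Inj)
  have "(\<lambda>(\<omega>, \<sigma>). \<Prod>j<k. ennreal (h j (J \<omega> (\<sigma> j)))) \<in> borel_measurable (M \<Otimes>\<^sub>M count_space (Inj k))"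
  proof (subst measurable_pair_swap_iff)
    show "(\<lambda>(x, y). case (y, x) of (\<omega>, \<sigma>) \<Rightarrow> \<Prod>j<k. ennreal (h j (J \<omega> (\<sigma> j)))) \<in> borel_measurable (count_space (Inj k) \<Otimes>\<^sub>M M)"
    proof (rule measurable_pair_measure_countable1[OF countable_Inj])
      fix \<sigma>
      show "(\<lambda>y. case (\<sigma>, y) of (x, y) \<Rightarrow> case (y, x) of (\<omega>, \<sigma>) \<Rightarrow> \<Prod>j<k. ennreal (h j (J \<omega> (\<sigma> j)))) \<in> borel_measurable M"
        unfolding prod.case
      proof (rule borel_measurable_prod_ennreal)
        fix j assume "j \<in> {..<k}"
        then have [measurable]: "h j \<in> borel_measurable borel" using assms by auto
        show "(\<lambda>x. ennreal (h j (J x (\<sigma> j)))) \<in> borel_measurable M" by measurable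
      qed
    qed
  qed
  then show ?thesis unfolding S_def[abs_def] SW_def by measurable
qed

end


lemma quot_exp_lim:
  fixes y :: real
  shows "((\<lambda>s. (1 - exp (- s * y)) / s) \<longlongrightarrow> y) (at_right 0)"
proof -
  have "((\<lambda>s. exp (- s * y)) has_field_derivative (exp (- 0 * y) * (- y))) (at 0 within {0<..})"
    by (auto intro!: derivative_eq_intros)
  then have "((\<lambda>s. (exp (- s * y) - exp (- 0 * y)) / (s - 0)) \<longlongrightarrow> - y) (at_right 0)"
    unfolding has_field_derivative_iff by simp
  then have "((\<lambda>s. - ((exp (- s * y) - 1) / s)) \<longlongrightarrow> - (- y)) (at_right 0)"
    by (intro tendsto_minus) simp
  then show ?thesis by (simp add: minus_divide_left)
qed

lemma quot_lim:
  fixes v u :: "real \<Rightarrow> real"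
  assumes [measurable]: "v \<in> borel_measurable borel" "u \<in> borel_measurable borel"
    and nn: "\<And>x. 0 \<le> v x" "\<And>x. 0 \<le> u x"
    and int: "integrable lborel (\<lambda>x. v x * u x)"
  shows "((\<lambda>s. (LINT x|lborel. v x * (1 - exp (- s * u x))) / s) \<longlongrightarrow> (LINT x|lborel. v x * u x)) (at_right 0)"
proof (rule tendsto_at_right_sequentially[where b=1])
  fix S :: "nat \<Rightarrow> real"
  assume S: "\<And>n. 0 < S n" "\<And>n. S n < 1" "S \<longlonglongrightarrow> 0"
  have "(\<lambda>n. LINT x|lborel. v x * ((1 - exp (- S n * u x)) / S n)) \<longlonglongrightarrow> (LINT x|lborel. v x * u x)"
  proof (rule integral_dominated_convergence[where w="\<lambda>x. v x * u x"])
    show "(\<lambda>x. v x * u x) \<in> borel_measurable lborel" by measurable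
    show "\<And>n. (\<lambda>x. v x * ((1 - exp (- S n * u x)) / S n)) \<in> borel_measurable lborel" by measurable
    show "integrable lborel (\<lambda>x. v x * u x)" by (rule int)
    show "AE x in lborel. (\<lambda>n. v x * ((1 - exp (- S n * u x)) / S n)) \<longlonglongrightarrow> v x * u x"
    proof (rule AE_I2)
      fix x
      have "filterlim S (at_right 0) sequentially"
        using S by (intro tendsto_imp_filterlim_at_right) auto
      then have "(\<lambda>n. (1 - exp (- S n * u x)) / S n) \<longlonglongrightarrow> u x"
        using quot_exp_lim[of "u x"] by (rule filterlim_compose[rotated])
      then show "(\<lambda>n. v x * ((1 - exp (- S n * u x)) / S n)) \<longlonglongrightarrow> v x * u x"
        by (intro tendsto_mult tendsto_const)
    qed
    show "\<And>n. AE x in lborel. norm (v x * ((1 - exp (- S n * u x)) / S n)) \<le> v x * u x"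
    proof (intro AE_I2)
      fix n x
      have s: "0 < S n" by (rule S)
      have a: "0 \<le> 1 - exp (- S n * u x)" using nn(2)[of x] s by simp
      have b: "1 - exp (- S n * u x) \<le> S n * u x" using one_minus_exp_le[of "S n * u x"] by simp
      have q1: "(1 - exp (- S n * u x)) / S n \<le> u x" using b s by (simp add: divide_le_eq mult.commute)
      have q2: "0 \<le> (1 - exp (- S n * u x)) / S n" using a s by simp
      have z: "0 \<le> v x * ((1 - exp (- S n * u x)) / S n)" by (rule mult_nonneg_nonneg[OF nn(1) q2])
      have w: "v x * ((1 - exp (- S n * u x)) / S n) \<le> v x * u x" by (rule mult_left_mono[OF q1 nn(1)])
      show "norm (v x * ((1 - exp (- S n * u x)) / S n)) \<le> v x * u x"
        unfolding real_norm_def abs_of_nonneg[OF z] by (rule w)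
    qed
  qed
  then show "(\<lambda>n. (LINT x|lborel. v x * (1 - exp (- S n * u x))) / S n) \<longlonglongrightarrow> (LINT x|lborel. v x * u x)"
    by (simp only: times_divide_eq_right integral_divide_zero)
qed simp

lemma has_field_derivative_prod_within:
  assumes "\<And>x. x \<in> A \<Longrightarrow> (f x has_field_derivative f' x) (at z within T)"
  shows   "((\<lambda>u. \<Prod>x\<in>A. f x u) has_field_derivative (\<Sum>x\<in>A. f' x * (\<Prod>y\<in>A-{x}. f y z))) (at z within T)"
proof (cases "finite A")
  case False then show ?thesis by simp
next
  case True
  then show ?thesis using assms
  proof (induction A rule: finite_induct)
    case empty then show ?case by simp
  next
    case (insert x A)
    have d: "((\<lambda>u. f x u * (\<Prod>y\<in>A. f y u)) has_field_derivative
        f x z * (\<Sum>y\<in>A. f' y * (\<Prod>w\<in>A-{y}. f w z)) + f' x * (\<Prod>y\<in>A. f y z)) (at z within T)"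
      by (rule DERIV_mult'[OF insert.prems[OF insertI1] insert.IH[OF insert.prems[OF insertI2]]])
    have eq: "insert x A - {y} = insert x (A - {y})" if "y \<in> A" for y
      using insert.hyps that by auto
    have "(\<Sum>y\<in>insert x A. f' y * (\<Prod>w\<in>insert x A - {y}. f w z)) =
        f' x * (\<Prod>y\<in>A. f y z) + (\<Sum>y\<in>A. f' y * (\<Prod>w\<in>insert x A - {y}. f w z))"
      using insert.hyps by (subst sum.insert) auto
    also have "(\<Sum>y\<in>A. f' y * (\<Prod>w\<in>insert x A - {y}. f w z)) = (\<Sum>y\<in>A. f' y * (f x z * (\<Prod>w\<in>A - {y}. f w z)))"
      using insert.hyps by (intro sum.cong refl) (simp add: eq)
    also have "\<dots> = f x z * (\<Sum>y\<in>A. f' y * (\<Prod>w\<in>A-{y}. f w z))"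
      by (simp add: sum_distrib_left ac_simps)
    finally have e2: "f x z * (\<Sum>y\<in>A. f' y * (\<Prod>w\<in>A-{y}. f w z)) + f' x * (\<Prod>y\<in>A. f y z) =
        (\<Sum>y\<in>insert x A. f' y * (\<Prod>w\<in>insert x A - {y}. f w z))" by simp
    show ?case using DERIV_cong[OF d e2] insert.hyps by simp
  qed
qed

context NB begin

lemma AE_le1: "AE \<omega> in M. \<forall>i. J \<omega> i \<le> 1"
proof -
  define f1 :: "real \<Rightarrow> real" where "f1 = indicator {1<..}"
  have [measurable]: "f1 \<in> borel_measurable borel" unfolding f1_def by measurable
  have f1nn: "\<forall>x. 0 \<le> f1 x" unfolding f1_def by auto
  have L00: "(\<lambda>x. ennreal ((1 - exp (- f1 x)) * rhoPD \<alpha> x)) = (\<lambda>x. 0)"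
  proof (rule ext)
    fix x :: real
    show "ennreal ((1 - exp (- f1 x)) * rhoPD \<alpha> x) = 0"
    proof (cases "1 < x")
      case True then show ?thesis by (simp add: rhoPD_def)
    next
      case False then show ?thesis by (simp add: f1_def)
    qed
  qed
  have L0: "(\<integral>\<^sup>+x. ennreal ((1 - exp (- f1 x)) * rhoPD \<alpha> x) \<partial>lborel) = 0"
    unfolding L00 by simp
  have "NB_laplace \<alpha> r f1 = 1"
    unfolding NB_laplace_def Let_def L0 by simp
  then have E1: "(\<integral>\<^sup>+\<omega>. ennreal (Xp f1 \<omega>) \<partial>M) = 1"
    using J_NB[of f1, OF _ f1nn] unfolding Xp_def Nf_def by simp
  have Xm: "Xp f1 \<in> borel_measurable M" by measurable
  have I1: "integral\<^sup>L M (Xp f1) = 1"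
    by (subst integral_eq_nn_integral[OF Xm]) (simp_all add: E1[unfolded Xp_def] expneg_range Xp_def)
  have intX: "integrable M (Xp f1)"
    by (rule integrable_const_bound[where B=1, OF _ Xm]) (simp add: Xp_def expneg_range)
  have ic: "integrable M (\<lambda>_. 1::real)" by simp
  have "integral\<^sup>L M (\<lambda>\<omega>. 1 - Xp f1 \<omega>) = 0"
    using Bochner_Integration.integral_diff[OF ic intX] I1 by (simp add: prob_space)
  moreover have "integrable M (\<lambda>\<omega>. 1 - Xp f1 \<omega>)"
    using intX ic by (intro Bochner_Integration.integrable_diff)
  ultimately have "AE \<omega> in M. 1 - Xp f1 \<omega> = 0"
    using integral_nonneg_eq_0_iff_AE[of M "\<lambda>\<omega>. 1 - Xp f1 \<omega>"] by (simp add: Xp_def expneg_range)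
  then show ?thesis
  proof (rule AE_mp, intro AE_I2 impI allI)
    fix \<omega> i assume "1 - Xp f1 \<omega> = 0"
    then have "Nf f1 \<omega> = 0" unfolding Xp_def using expneg_eq_1 by simp
    then have "\<forall>i. ennreal (f1 (J \<omega> i)) = 0" unfolding Nf_def
      by (subst suminf_eq_zero_iff[symmetric]) simp_all
    then have "ennreal (f1 (J \<omega> i)) = 0" by blast
    then have "f1 (J \<omega> i) \<le> 0" by (simp only: ennreal_eq_0_iff)
    then have "f1 (J \<omega> i) = 0" using f1nn by (meson order.antisym)
    then show "J \<omega> i \<le> 1" unfolding f1_def by (simp add: indicator_def split: if_splits)
  qed
qed

lemma AE_Gd: "AE \<omega> in M. Gd \<omega>"
  using AE_le1 J_ranked by eventually_elim (simp add: Gd_def)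

definition "NS u \<omega> = enn2real (Nf u \<omega>)"

lemma NS_meas[measurable]: assumes [measurable]: "u \<in> borel_measurable borel" shows "NS u \<in> borel_measurable M"
  unfolding NS_def[abs_def] by measurable

lemma Nf_fin:
  assumes "Gd \<omega>" "adm_h h"
  shows "summable (\<lambda>i. h (J \<omega> i))" "Nf h \<omega> = ennreal (NS h \<omega>)" "0 \<le> NS h \<omega>" "NS h \<omega> = (\<Sum>i. h (J \<omega> i))"
proof -
  show sm: "summable (\<lambda>i. h (J \<omega> i))"
  proof (rule summable_comparison_test[where g="J \<omega>"])
    have "norm (h (J \<omega> n)) \<le> J \<omega> n" for n
    proof -
      have j: "0 < J \<omega> n" "J \<omega> n \<le> 1" using assms(1) by (auto simp: Gd_def)
      show ?thesis using adm_hD(2)[OF assms(2), of "J \<omega> n"] adm_hD(3)[OF assms(2) j] by simp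
    qed
    then show "\<exists>N. \<forall>n\<ge>N. norm (h (J \<omega> n)) \<le> J \<omega> n" by blast
    show "summable (J \<omega>)" using assms by (auto simp: Gd_def)
  qed
  have e: "Nf h \<omega> = ennreal (\<Sum>i. h (J \<omega> i))"
    unfolding Nf_def using sm adm_hD(2)[OF assms(2)] by (intro suminf_ennreal2) auto
  have nn: "0 \<le> (\<Sum>i. h (J \<omega> i))" using sm adm_hD(2)[OF assms(2)] by (intro suminf_nonneg) auto
  show "NS h \<omega> = (\<Sum>i. h (J \<omega> i))" unfolding NS_def e using nn by simp
  then show "Nf h \<omega> = ennreal (NS h \<omega>)" using e by simp
  show "0 \<le> NS h \<omega>" unfolding NS_def by simp
qed

lemma Xp_add:
  assumes "Gd \<omega>" "adm_h u" "\<And>x. 0 \<le> f x" "0 \<le> s"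
  shows "Xp (\<lambda>x. f x + s * u x) \<omega> = Xp f \<omega> * exp (- s * NS u \<omega>)"
proof -
  have u0: "\<And>x. 0 \<le> u x" using adm_hD(2)[OF assms(2)] .
  have "Nf (\<lambda>x. f x + s * u x) \<omega> = (\<Sum>i. ennreal (f (J \<omega> i)) + ennreal (s * u (J \<omega> i)))"
    unfolding Nf_def using assms(3,4) u0 by (intro suminf_cong ennreal_plus) auto
  also have "\<dots> = Nf f \<omega> + (\<Sum>i. ennreal (s * u (J \<omega> i)))"
    unfolding Nf_def by (rule suminf_add[symmetric]) auto
  also have "(\<Sum>i. ennreal (s * u (J \<omega> i))) = ennreal (s * NS u \<omega>)"
  proof -
    have sm: "summable (\<lambda>i. s * u (J \<omega> i))" using Nf_fin(1)[OF assms(1,2)] by (rule summable_mult)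
    have "(\<Sum>i. ennreal (s * u (J \<omega> i))) = ennreal (\<Sum>i. s * u (J \<omega> i))"
      using sm u0 assms(4) by (intro suminf_ennreal2) auto
    also have "(\<Sum>i. s * u (J \<omega> i)) = s * NS u \<omega>"
      unfolding Nf_fin(4)[OF assms(1,2)] using Nf_fin(1)[OF assms(1,2)] by (rule suminf_mult)
    finally show ?thesis .
  qed
  finally show ?thesis unfolding Xp_def
    using Nf_fin(3)[OF assms(1,2)] assms(4) by (simp add: expneg_add)
qed

lemma F0: assumes "adm_f f" shows "F 0 f h = ennreal (C 0 f h)"
proof -
  have "F 0 f h = (\<integral>\<^sup>+\<omega>. ennreal (expneg (\<Sum>i. ennreal (f (J \<omega> i)))) \<partial>M)"
    unfolding F_def S_def SW_0 Xp_def Nf_def by simp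
  also have "\<dots> = ennreal (NB_laplace \<alpha> r f)"
    using adm_fD(1,2)[OF assms] by (intro J_NB) auto
  also have "NB_laplace \<alpha> r f = C 0 f h"
    unfolding NB_Phi[OF assms] C_def by simp
  finally show ?thesis .
qed

end


lemma phi_dec:
  fixes a b :: real assumes "0 < a" "a \<le> b"
  shows "(1 - exp (- b)) / b \<le> (1 - exp (- a)) / a"
proof (rule DERIV_nonpos_imp_nonincreasing[OF assms(2)])
  fix z :: real assume z: "a \<le> z" "z \<le> b"
  then have zp: "0 < z" using assms by linarith
  have d: "DERIV (\<lambda>z. (1 - exp (- z)) / z) z :> ((exp (- z)) * z - (1 - exp (- z)) * 1) / (z * z)"
    using zp by (auto intro!: derivative_eq_intros)
  have "exp (- z) * (1 + z) \<le> exp (- z) * exp z"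
    using exp_ge_add_one_self[of z] by (intro mult_left_mono) (auto simp: add.commute)
  then have "exp (- z) * z - (1 - exp (- z)) * 1 \<le> 0" by (simp add: exp_minus field_simps)
  then have "((exp (- z)) * z - (1 - exp (- z)) * 1) / (z * z) \<le> 0"
    by (intro divide_nonpos_nonneg) auto
  with d show "\<exists>y. DERIV (\<lambda>z. (1 - exp (- z)) / z) z :> y \<and> y \<le> 0" by blast
qed

lemma dec_quot:
  fixes s t y :: real assumes "0 < s" "s \<le> t" "0 \<le> y"
  shows "(1 - exp (- t * y)) / t \<le> (1 - exp (- s * y)) / s"
proof (cases "y = 0")
  case True then show ?thesis by simp
next
  case False
  then have y: "0 < y" using assms by simp
  have "(1 - exp (- (t * y))) / (t * y) \<le> (1 - exp (- (s * y))) / (s * y)"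
    using assms y by (intro phi_dec) (auto intro: mult_right_mono)
  then have "y * ((1 - exp (- (t * y))) / (t * y)) \<le> y * ((1 - exp (- (s * y))) / (s * y))"
    using y by (intro mult_left_mono) auto
  moreover have "y * ((1 - exp (- (t * y))) / (t * y)) = (1 - exp (- t * y)) / t" using y assms by simp
  moreover have "y * ((1 - exp (- (s * y))) / (s * y)) = (1 - exp (- s * y)) / s" using y assms by simp
  ultimately show ?thesis by simp
qed

context NB begin

lemma adm_f_add:
  assumes "adm_f f" "adm_h u" "0 \<le> s" shows "adm_f (\<lambda>x. f x + s * u x)"
proof -
  obtain c where c: "c \<ge> 0" "\<forall>x. 0 < x \<longrightarrow> x \<le> 1 \<longrightarrow> f x \<le> c * x" using adm_fD(3)[OF assms(1)] by blast
  note [measurable] = adm_fD(1)[OF assms(1)] adm_hD(1)[OF assms(2)]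
  have "f x + s * u x \<le> (c + s) * x" if x: "0 < x" "x \<le> 1" for x
  proof -
    have "s * u x \<le> s * x" using adm_hD(3)[OF assms(2) x] assms(3) by (rule mult_left_mono)
    moreover have "f x \<le> c * x" using c(2) x by blast
    ultimately show ?thesis by (simp add: distrib_right)
  qed
  moreover have "0 \<le> f x + s * u x" for x using adm_fD(2)[OF assms(1), of x] adm_hD(2)[OF assms(2), of x] assms(3) by simp
  moreover have "(\<lambda>x. f x + s * u x) \<in> borel_measurable borel" by measurable
  ultimately show ?thesis unfolding adm_f_def by blast
qed

lemma adm_h_mult:
  assumes "adm_h h" "adm_h u" shows "adm_h (\<lambda>x. h x * u x)"
proof -
  note [measurable] = adm_hD(1)[OF assms(1)] adm_hD(1)[OF assms(2)]
  have "h x * u x \<le> x" if x: "0 < x" "x \<le> 1" for x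
  proof -
    have "h x * u x \<le> x * 1"
      using adm_hD(3)[OF assms(1) x] adm_hD(3)[OF assms(2) x] adm_hD(2)[OF assms(1), of x] adm_hD(2)[OF assms(2), of x] x
      by (intro mult_mono) auto
    then show ?thesis by simp
  qed
  moreover have "0 \<le> h x * u x" for x using adm_hD(2)[OF assms(1), of x] adm_hD(2)[OF assms(2), of x] by simp
  moreover have "(\<lambda>x. h x * u x) \<in> borel_measurable borel" by measurable
  ultimately show ?thesis unfolding adm_h_def by blast
qed

lemma Phi_deriv:
  assumes f: "adm_f f" and u: "adm_h u"
  shows "((\<lambda>s. Phi (\<lambda>x. f x + s * u x)) has_field_derivative Dn f u) (at_right 0)"
proof -
  note [measurable] = adm_fD(1)[OF f] adm_hD(1)[OF u]
  have int1: "integrable lborel (\<lambda>x. exp (- f x) * rho x * u x)"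
  proof -
    have "(\<lambda>x. exp (- f x) * rho x * u x) = (\<lambda>x. exp (- f x) * u x * rho x)" by (simp add: fun_eq_iff ac_simps)
    then show ?thesis using int_Dn[OF f u] by simp
  qed
  have lim: "((\<lambda>s. (LINT x|lborel. exp (- f x) * rho x * (1 - exp (- s * u x))) / s) \<longlongrightarrow> (LINT x|lborel. exp (- f x) * rho x * u x)) (at_right 0)"
    using quot_lim[of "\<lambda>x. exp (- f x) * rho x" u] int1 rho_nonneg adm_hD(2)[OF u] by simp
  have eq: "(Phi (\<lambda>x. f x + s * u x) - Phi (\<lambda>x. f x + 0 * u x)) / (s - 0) = (LINT x|lborel. exp (- f x) * rho x * (1 - exp (- s * u x))) / s"
    if s: "0 < s" for s
  proof -
    have a: "adm_f (\<lambda>x. f x + s * u x)" using adm_f_add[OF f u] s by simp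
    have "Phi (\<lambda>x. f x + s * u x) - Phi (\<lambda>x. f x + 0 * u x) =
      (LINT x|lborel. (1 - exp (- (f x + s * u x))) * rho x - (1 - exp (- f x)) * rho x)"
      unfolding Phi_def using int_Phi[OF a] int_Phi[OF f] by simp
    also have "\<dots> = (LINT x|lborel. exp (- f x) * rho x * (1 - exp (- s * u x)))"
    proof (rule Bochner_Integration.integral_cong[OF refl])
      fix x
      have "exp (- (f x + s * u x)) = exp (- f x) * exp (- s * u x)" by (simp add: exp_add[symmetric])
      then show "(1 - exp (- (f x + s * u x))) * rho x - (1 - exp (- f x)) * rho x = exp (- f x) * rho x * (1 - exp (- s * u x))"
        by (simp add: algebra_simps)
    qed
    finally show ?thesis by simp
  qed
  have "((\<lambda>s. (Phi (\<lambda>x. f x + s * u x) - Phi (\<lambda>x. f x + 0 * u x)) / (s - 0)) \<longlongrightarrow> Dn f u) (at_right 0)"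
  proof (subst tendsto_cong)
    show "\<forall>\<^sub>F s in at_right 0. (Phi (\<lambda>x. f x + s * u x) - Phi (\<lambda>x. f x + 0 * u x)) / (s - 0) = (LINT x|lborel. exp (- f x) * rho x * (1 - exp (- s * u x))) / s"
      using eventually_at_right_less[of "0::real"] by eventually_elim (rule eq)
    have "Dn f u = (LINT x|lborel. exp (- f x) * rho x * u x)" unfolding Dn_def by (simp add: ac_simps)
    then show "((\<lambda>s. (LINT x|lborel. exp (- f x) * rho x * (1 - exp (- s * u x))) / s) \<longlongrightarrow> Dn f u) (at_right 0)"
      using lim by simp
  qed
  then show ?thesis unfolding has_field_derivative_iff by simp
qed

lemma Dn_deriv:
  assumes f: "adm_f f" and u: "adm_h u" and h: "adm_h h"
  shows "((\<lambda>s. Dn (\<lambda>x. f x + s * u x) h) has_field_derivative - Dn f (\<lambda>x. h x * u x)) (at_right 0)"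
proof -
  note [measurable] = adm_fD(1)[OF f] adm_hD(1)[OF u] adm_hD(1)[OF h]
  have int1: "integrable lborel (\<lambda>x. exp (- f x) * h x * rho x * u x)"
  proof -
    have "(\<lambda>x. exp (- f x) * h x * rho x * u x) = (\<lambda>x. exp (- f x) * (h x * u x) * rho x)" by (simp add: fun_eq_iff ac_simps)
    then show ?thesis using int_Dn[OF f adm_h_mult[OF h u]] by simp
  qed
  have lim: "((\<lambda>s. (LINT x|lborel. exp (- f x) * h x * rho x * (1 - exp (- s * u x))) / s) \<longlongrightarrow> (LINT x|lborel. exp (- f x) * h x * rho x * u x)) (at_right 0)"
    using quot_lim[of "\<lambda>x. exp (- f x) * h x * rho x" u] int1 rho_nonneg adm_hD(2)[OF u] adm_hD(2)[OF h] by simp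
  have eq: "(Dn (\<lambda>x. f x + s * u x) h - Dn (\<lambda>x. f x + 0 * u x) h) / (s - 0) = - ((LINT x|lborel. exp (- f x) * h x * rho x * (1 - exp (- s * u x))) / s)"
    if s: "0 < s" for s
  proof -
    have a: "adm_f (\<lambda>x. f x + s * u x)" using adm_f_add[OF f u] s by simp
    have "Dn (\<lambda>x. f x + s * u x) h - Dn (\<lambda>x. f x + 0 * u x) h =
      (LINT x|lborel. exp (- (f x + s * u x)) * h x * rho x - exp (- f x) * h x * rho x)"
      unfolding Dn_def using int_Dn[OF a h] int_Dn[OF f h] by simp
    also have "\<dots> = (LINT x|lborel. - (exp (- f x) * h x * rho x * (1 - exp (- s * u x))))"
    proof (rule Bochner_Integration.integral_cong[OF refl])
      fix x
      have "exp (- (f x + s * u x)) = exp (- f x) * exp (- s * u x)" by (simp add: exp_add[symmetric])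
      then show "exp (- (f x + s * u x)) * h x * rho x - exp (- f x) * h x * rho x = - (exp (- f x) * h x * rho x * (1 - exp (- s * u x)))"
        by (simp add: algebra_simps)
    qed
    also have "\<dots> = - (LINT x|lborel. exp (- f x) * h x * rho x * (1 - exp (- s * u x)))"
      by (rule Bochner_Integration.integral_minus)
    finally show ?thesis by simp
  qed
  have "((\<lambda>s. (Dn (\<lambda>x. f x + s * u x) h - Dn (\<lambda>x. f x + 0 * u x) h) / (s - 0)) \<longlongrightarrow> - Dn f (\<lambda>x. h x * u x)) (at_right 0)"
  proof (subst tendsto_cong)
    show "\<forall>\<^sub>F s in at_right 0. (Dn (\<lambda>x. f x + s * u x) h - Dn (\<lambda>x. f x + 0 * u x) h) / (s - 0) = - ((LINT x|lborel. exp (- f x) * h x * rho x * (1 - exp (- s * u x))) / s)"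
      using eventually_at_right_less[of "0::real"] by eventually_elim (rule eq)
    have "Dn f (\<lambda>x. h x * u x) = (LINT x|lborel. exp (- f x) * h x * rho x * u x)" unfolding Dn_def by (simp add: ac_simps)
    then show "((\<lambda>s. - ((LINT x|lborel. exp (- f x) * h x * rho x * (1 - exp (- s * u x))) / s)) \<longlongrightarrow> - Dn f (\<lambda>x. h x * u x)) (at_right 0)"
      using tendsto_minus[OF lim] by simp
  qed
  then show ?thesis unfolding has_field_derivative_iff by simp
qed

end


context NB begin

lemma C_deriv:
  assumes f: "adm_f f" and u: "adm_h u" and h: "\<forall>j<k. adm_h (h j)"
  shows "((\<lambda>s. C k (\<lambda>x. f x + s * u x) h) has_field_derivative
     pochhammer r k * (Phi f powr (-(r + real k)) * (\<Sum>j<k. (- Dn f (\<lambda>x. h j x * u x)) * (\<Prod>i\<in>{..<k}-{j}. Dn f (h i)))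
       + (-(r + real k)) * Phi f powr (-(r + real k) - 1) * Dn f u * (\<Prod>j<k. Dn f (h j)))) (at_right 0)"
proof -
  let ?c = "-(r + real k)"
  have P0: "Phi (\<lambda>x. f x + 0 * u x) = Phi f" by simp
  have pos: "0 < Phi f" using Phi_ge1[OF f] by simp
  have d0: "DERIV (\<lambda>z. z powr ?c) (Phi (\<lambda>x. f x + 0 * u x)) :> ?c * Phi f powr (?c - 1)"
    unfolding P0 by (rule has_real_derivative_powr[OF pos])
  have dP: "((\<lambda>s. Phi (\<lambda>x. f x + s * u x) powr ?c) has_field_derivative ?c * Phi f powr (?c - 1) * Dn f u) (at_right 0)"
    using DERIV_chain2[OF d0 Phi_deriv[OF f u]] by simp
  have dD: "((\<lambda>s. \<Prod>j<k. Dn (\<lambda>x. f x + s * u x) (h j)) has_field_derivative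
      (\<Sum>j<k. (- Dn f (\<lambda>x. h j x * u x)) * (\<Prod>i\<in>{..<k}-{j}. Dn (\<lambda>x. f x + 0 * u x) (h i)))) (at_right 0)"
    by (rule has_field_derivative_prod_within) (use Dn_deriv[OF f u] h in auto)
  have "((\<lambda>s. pochhammer r k * (Phi (\<lambda>x. f x + s * u x) powr ?c * (\<Prod>j<k. Dn (\<lambda>x. f x + s * u x) (h j)))) has_field_derivative
     pochhammer r k * (Phi (\<lambda>x. f x + 0 * u x) powr ?c * (\<Sum>j<k. (- Dn f (\<lambda>x. h j x * u x)) * (\<Prod>i\<in>{..<k}-{j}. Dn (\<lambda>x. f x + 0 * u x) (h i)))
       + ?c * Phi f powr (?c - 1) * Dn f u * (\<Prod>j<k. Dn (\<lambda>x. f x + 0 * u x) (h j)))) (at_right 0)"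
    by (intro DERIV_cmult DERIV_mult' dP dD)
  then show ?thesis unfolding C_def by (simp add: mult.assoc)
qed

lemma step:
  assumes IH: "\<And>f h. adm_f f \<Longrightarrow> \<forall>j<k. adm_h (h j) \<Longrightarrow> F k f h = ennreal (C k f h)"
    and f: "adm_f f" and h: "\<forall>j<Suc k. adm_h (h j)"
  shows "F (Suc k) f h = ennreal (C (Suc k) f h)"
proof -
  define u where "u = h k"
  have u: "adm_h u" using h by (simp add: u_def)
  have hk: "\<forall>j<k. adm_h (h j)" using h by simp
  note [measurable] = adm_fD(1)[OF f] adm_hD(1)[OF u]
  have hm: "\<And>j. j < Suc k \<Longrightarrow> h j \<in> borel_measurable borel" using h adm_hD(1) by blast
  have hmk: "\<And>j. j < k \<Longrightarrow> h j \<in> borel_measurable borel" using hm by simp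
  have f0: "\<And>x. 0 \<le> f x" by (rule adm_fD(2)[OF f])
  have Sm[measurable]: "S k h \<in> borel_measurable M" using hmk by (rule S_meas)
  define Cs where "Cs s = C k (\<lambda>x. f x + s * u x) h" for s
  define Cd where "Cd = pochhammer r k * (Phi f powr (-(r + real k)) * (\<Sum>j<k. (- Dn f (\<lambda>x. h j x * u x)) * (\<Prod>i\<in>{..<k}-{j}. Dn f (h i)))
       + (-(r + real k)) * Phi f powr (-(r + real k) - 1) * Dn f u * (\<Prod>j<k. Dn f (h j)))"
  have Cs_der: "(Cs has_field_derivative Cd) (at_right 0)"
    unfolding Cs_def Cd_def by (rule C_deriv[OF f u hk])
  have Cs0: "Cs 0 = C k f h" unfolding Cs_def by simp
  define sq where "sq m = inverse (real (Suc m))" for m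
  have sq_pos: "0 < sq m" for m unfolding sq_def by simp
  have sq_mono: "sq (Suc m) \<le> sq m" for m unfolding sq_def by (simp add: field_simps)
  have sq_lim: "filterlim sq (at_right 0) sequentially"
    unfolding sq_def by (intro tendsto_imp_filterlim_at_right LIMSEQ_inverse_real_of_nat) auto
  have "((\<lambda>y. (Cs y - Cs 0) / (y - 0)) \<longlongrightarrow> Cd) (at_right 0)"
    using Cs_der unfolding has_field_derivative_iff .
  then have "(\<lambda>m. (Cs (sq m) - Cs 0) / (sq m - 0)) \<longlonglongrightarrow> Cd"
    using sq_lim by (rule filterlim_compose)
  then have "(\<lambda>m. - ((Cs (sq m) - Cs 0) / (sq m - 0))) \<longlonglongrightarrow> - Cd" by (rule tendsto_minus)
  then have qlim: "(\<lambda>m. (Cs 0 - Cs (sq m)) / sq m) \<longlonglongrightarrow> - Cd"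
    by (simp add: minus_divide_left)
  have Cnn: "0 \<le> Cs s" if "0 \<le> s" for s
    unfolding Cs_def using adm_f_add[OF f u that] hk by (intro C_nonneg) auto
  have NS0: "0 \<le> NS u \<omega>" for \<omega> unfolding NS_def by simp
  have X0: "0 \<le> Xp f \<omega>" for \<omega> unfolding Xp_def by (simp add: expneg_range)
  define g where "g m \<omega> = ennreal (Xp f \<omega> * ((1 - exp (- sq m * NS u \<omega>)) / sq m)) * S k h \<omega>" for m \<omega>
  have gm[measurable]: "g m \<in> borel_measurable M" for m
    unfolding g_def using hmk by measurable
  have Q: "(\<integral>\<^sup>+\<omega>. g m \<omega> \<partial>M) = ennreal ((Cs 0 - Cs (sq m)) / sq m)" for m
  proof -
    define s where "s = sq m"
    have s: "0 < s" unfolding s_def by (rule sq_pos)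
    have admfs: "adm_f (\<lambda>x. f x + s * u x)" using adm_f_add[OF f u] s by simp
    have e01: "0 \<le> exp (- s * NS u \<omega>)" "exp (- s * NS u \<omega>) \<le> 1" for \<omega>
      using NS0[of \<omega>] s by (auto simp: mult_nonneg_nonneg)
    define Q1 where "Q1 = (\<integral>\<^sup>+\<omega>. ennreal (Xp f \<omega> * (1 - exp (- s * NS u \<omega>))) * S k h \<omega> \<partial>M)"
    have "ennreal (Cs 0) = F k f h" using IH[OF f hk] Cs0 by simp
    also have "F k f h = (\<integral>\<^sup>+\<omega>. ennreal (Xp f \<omega> * exp (- s * NS u \<omega>)) * S k h \<omega>
        + ennreal (Xp f \<omega> * (1 - exp (- s * NS u \<omega>))) * S k h \<omega> \<partial>M)"
      unfolding F_def
    proof (rule nn_integral_cong)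
      fix \<omega>
      have "ennreal (Xp f \<omega>) = ennreal (Xp f \<omega> * exp (- s * NS u \<omega>)) + ennreal (Xp f \<omega> * (1 - exp (- s * NS u \<omega>)))"
      proof -
        have "Xp f \<omega> * exp (- s * NS u \<omega>) \<le> Xp f \<omega>" by (rule mult_left_le[OF e01(2) X0])
        then show ?thesis
          using X0[of \<omega>] e01[of \<omega>] by (subst ennreal_plus[symmetric]) (auto simp: algebra_simps)
      qed
      then show "ennreal (Xp f \<omega>) * S k h \<omega> = ennreal (Xp f \<omega> * exp (- s * NS u \<omega>)) * S k h \<omega>
        + ennreal (Xp f \<omega> * (1 - exp (- s * NS u \<omega>))) * S k h \<omega>"
        by (simp add: distrib_right)
    qed
    also have "\<dots> = (\<integral>\<^sup>+\<omega>. ennreal (Xp f \<omega> * exp (- s * NS u \<omega>)) * S k h \<omega> \<partial>M) + Q1"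
      unfolding Q1_def using hmk by (intro nn_integral_add) measurable
    also have "(\<integral>\<^sup>+\<omega>. ennreal (Xp f \<omega> * exp (- s * NS u \<omega>)) * S k h \<omega> \<partial>M) = F k (\<lambda>x. f x + s * u x) h"
      unfolding F_def
    proof (rule nn_integral_cong_AE)
      show "AE \<omega> in M. ennreal (Xp f \<omega> * exp (- s * NS u \<omega>)) * S k h \<omega> = ennreal (Xp (\<lambda>x. f x + s * u x) \<omega>) * S k h \<omega>"
        using AE_Gd by eventually_elim (use Xp_add[OF _ u f0] s in simp)
    qed
    also have "F k (\<lambda>x. f x + s * u x) h = ennreal (Cs s)" unfolding Cs_def by (rule IH[OF admfs hk])
    finally have A: "ennreal (Cs 0) = ennreal (Cs s) + Q1" .
    have "Q1 = ennreal (Cs 0) - ennreal (Cs s)" unfolding A by simp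
    also have "\<dots> = ennreal (Cs 0 - Cs s)" using Cnn[of s] s by (intro ennreal_minus) auto
    finally have Q1v: "Q1 = ennreal (Cs 0 - Cs s)" .
    have "(\<integral>\<^sup>+\<omega>. g m \<omega> \<partial>M) = (\<integral>\<^sup>+\<omega>. ennreal (1 / s) * (ennreal (Xp f \<omega> * (1 - exp (- s * NS u \<omega>))) * S k h \<omega>) \<partial>M)"
      unfolding g_def s_def[symmetric]
    proof (rule nn_integral_cong)
      fix \<omega>
      have "ennreal (Xp f \<omega> * ((1 - exp (- s * NS u \<omega>)) / s)) = ennreal (1 / s) * ennreal (Xp f \<omega> * (1 - exp (- s * NS u \<omega>)))"
        using s by (subst ennreal_mult'[symmetric]) (auto simp: field_simps)
      then show "ennreal (Xp f \<omega> * ((1 - exp (- s * NS u \<omega>)) / s)) * S k h \<omega> = ennreal (1 / s) * (ennreal (Xp f \<omega> * (1 - exp (- s * NS u \<omega>))) * S k h \<omega>)"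
        by (simp add: mult.assoc)
    qed
    also have "\<dots> = ennreal (1 / s) * Q1"
      unfolding Q1_def using hmk by (intro nn_integral_cmult) measurable
    also have "\<dots> = ennreal ((Cs 0 - Cs s) / s)"
      unfolding Q1v using s by (subst ennreal_mult'[symmetric]) auto
    finally show ?thesis unfolding s_def .
  qed
  have g_inc: "g m \<omega> \<le> g (Suc m) \<omega>" for m \<omega>
  proof -
    have "(1 - exp (- sq m * NS u \<omega>)) / sq m \<le> (1 - exp (- sq (Suc m) * NS u \<omega>)) / sq (Suc m)"
      by (rule dec_quot[OF sq_pos sq_mono NS0])
    then have "Xp f \<omega> * ((1 - exp (- sq m * NS u \<omega>)) / sq m) \<le> Xp f \<omega> * ((1 - exp (- sq (Suc m) * NS u \<omega>)) / sq (Suc m))"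
      using X0 by (rule mult_left_mono)
    then show ?thesis unfolding g_def by (intro mult_right_mono ennreal_leI) auto
  qed
  have a_lim: "(\<lambda>m. (1 - exp (- sq m * y)) / sq m) \<longlonglongrightarrow> y" for y
    using quot_exp_lim[of y] sq_lim by (rule filterlim_compose)
  have g_sup: "(SUP m. g m \<omega>) = ennreal (Xp f \<omega>) * Nf u \<omega> * S k h \<omega>" if G: "Gd \<omega>" for \<omega>
  proof -
    define a where "a m = ennreal (Xp f \<omega> * ((1 - exp (- sq m * NS u \<omega>)) / sq m))" for m
    have inc: "incseq a"
    proof (rule incseq_SucI)
      fix m
      have "(1 - exp (- sq m * NS u \<omega>)) / sq m \<le> (1 - exp (- sq (Suc m) * NS u \<omega>)) / sq (Suc m)"
        by (rule dec_quot[OF sq_pos sq_mono NS0])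
      then have "Xp f \<omega> * ((1 - exp (- sq m * NS u \<omega>)) / sq m) \<le> Xp f \<omega> * ((1 - exp (- sq (Suc m) * NS u \<omega>)) / sq (Suc m))"
        using X0 by (rule mult_left_mono)
      then show "a m \<le> a (Suc m)" unfolding a_def by (rule ennreal_leI)
    qed
    have "a \<longlonglongrightarrow> ennreal (Xp f \<omega> * NS u \<omega>)"
      unfolding a_def by (intro tendsto_ennrealI tendsto_mult tendsto_const a_lim)
    moreover have "a \<longlonglongrightarrow> (SUP m. a m)" using inc by (rule LIMSEQ_SUP)
    ultimately have aS: "(SUP m. a m) = ennreal (Xp f \<omega> * NS u \<omega>)" using LIMSEQ_unique by blast
    have "(SUP m. g m \<omega>) = (SUP m. a m) * S k h \<omega>"
      unfolding g_def a_def by (simp add: SUP_mult_right_ennreal)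
    also have "\<dots> = ennreal (Xp f \<omega>) * Nf u \<omega> * S k h \<omega>"
      unfolding aS Nf_fin(2)[OF G u] using X0 NS0 by (simp add: ennreal_mult)
    finally show ?thesis .
  qed
  have lhs: "(\<integral>\<^sup>+\<omega>. ennreal (Xp f \<omega>) * Nf u \<omega> * S k h \<omega> \<partial>M) = ennreal (- Cd)"
  proof -
    have "(\<integral>\<^sup>+\<omega>. ennreal (Xp f \<omega>) * Nf u \<omega> * S k h \<omega> \<partial>M) = (\<integral>\<^sup>+\<omega>. (SUP m. g m \<omega>) \<partial>M)"
      by (rule nn_integral_cong_AE) (use AE_Gd in \<open>eventually_elim, simp add: g_sup\<close>)
    also have "\<dots> = (SUP m. \<integral>\<^sup>+\<omega>. g m \<omega> \<partial>M)"
      by (rule nn_integral_monotone_convergence_SUP_AE) (auto intro: g_inc)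
    also have "\<dots> = ennreal (- Cd)"
    proof -
      have inc: "incseq (\<lambda>m. \<integral>\<^sup>+\<omega>. g m \<omega> \<partial>M)"
        by (rule incseq_SucI, rule nn_integral_mono, rule g_inc)
      have "(\<lambda>m. \<integral>\<^sup>+\<omega>. g m \<omega> \<partial>M) \<longlonglongrightarrow> ennreal (- Cd)"
        unfolding Q by (intro tendsto_ennrealI qlim)
      moreover have "(\<lambda>m. \<integral>\<^sup>+\<omega>. g m \<omega> \<partial>M) \<longlonglongrightarrow> (SUP m. \<integral>\<^sup>+\<omega>. g m \<omega> \<partial>M)" using inc by (rule LIMSEQ_SUP)
      ultimately show ?thesis using LIMSEQ_unique by metis
    qed
    finally show ?thesis .
  qed
  define h' where "h' j = h(j := (\<lambda>x. h j x * u x))" for j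
  have h'adm: "\<forall>i<k. adm_h (h' j i)" if "j < k" for j
    using hk adm_h_mult[OF _ u] that unfolding h'_def by auto
  have h'm: "\<And>i. i < k \<Longrightarrow> h' j i \<in> borel_measurable borel" if "j < k" for j
    using h'adm[OF that] adm_hD(1) by blast
  have comb: "Nf u \<omega> * S k h \<omega> = S (Suc k) h \<omega> + (\<Sum>j<k. S k (h' j) \<omega>)" for \<omega>
  proof -
    define W where "W j i = ennreal (h j (J \<omega> i))" for j i
    have "(\<lambda>j' i. ennreal (h' j j' (J \<omega> i))) = W(j := (\<lambda>i. W j i * W k i))" if "j < k" for j
      unfolding W_def h'_def u_def using adm_hD(2) h that
      by (auto simp: fun_eq_iff ennreal_mult)
    then have "(\<Sum>j<k. S k (h' j) \<omega>) = (\<Sum>j<k. SW k (W(j := (\<lambda>i. W j i * W k i))))"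
      unfolding S_def W_def by (intro sum.cong) auto
    moreover have "Nf u \<omega> = (\<Sum>i. W k i)" unfolding Nf_def W_def u_def ..
    ultimately show ?thesis using SW_Suc[of W k] unfolding S_def W_def by simp
  qed
  have "(\<integral>\<^sup>+\<omega>. ennreal (Xp f \<omega>) * Nf u \<omega> * S k h \<omega> \<partial>M) =
      (\<integral>\<^sup>+\<omega>. ennreal (Xp f \<omega>) * S (Suc k) h \<omega> + (\<Sum>j<k. ennreal (Xp f \<omega>) * S k (h' j) \<omega>) \<partial>M)"
    by (rule nn_integral_cong) (simp add: mult.assoc comb distrib_left sum_distrib_left)
  also have "\<dots> = F (Suc k) f h + (\<Sum>j<k. F k f (h' j))"
  proof -
    have S1: "S (Suc k) h \<in> borel_measurable M" using hm by (rule S_meas)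
    have Sj: "S k (h' j) \<in> borel_measurable M" if "j \<in> {..<k}" for j using h'm that by (intro S_meas) auto
    have Xm: "Xp f \<in> borel_measurable M" by measurable
    have m1: "(\<lambda>\<omega>. ennreal (Xp f \<omega>) * S (Suc k) h \<omega>) \<in> borel_measurable M"
      using Xm S1 by (intro borel_measurable_times_ennreal) auto
    have mj: "(\<lambda>\<omega>. ennreal (Xp f \<omega>) * S k (h' j) \<omega>) \<in> borel_measurable M" if "j \<in> {..<k}" for j
      using Xm Sj[OF that] by (intro borel_measurable_times_ennreal) auto
    have m2: "(\<lambda>\<omega>. \<Sum>j<k. ennreal (Xp f \<omega>) * S k (h' j) \<omega>) \<in> borel_measurable M"
      using mj by (rule borel_measurable_sum)
    have "(\<integral>\<^sup>+\<omega>. ennreal (Xp f \<omega>) * S (Suc k) h \<omega> + (\<Sum>j<k. ennreal (Xp f \<omega>) * S k (h' j) \<omega>) \<partial>M)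
      = (\<integral>\<^sup>+\<omega>. ennreal (Xp f \<omega>) * S (Suc k) h \<omega> \<partial>M) + (\<integral>\<^sup>+\<omega>. (\<Sum>j<k. ennreal (Xp f \<omega>) * S k (h' j) \<omega>) \<partial>M)"
      using m1 m2 by (rule nn_integral_add)
    also have "(\<integral>\<^sup>+\<omega>. (\<Sum>j<k. ennreal (Xp f \<omega>) * S k (h' j) \<omega>) \<partial>M) = (\<Sum>j<k. \<integral>\<^sup>+\<omega>. ennreal (Xp f \<omega>) * S k (h' j) \<omega> \<partial>M)"
      using mj by (rule nn_integral_sum)
    finally show ?thesis unfolding F_def .
  qed
  also have "(\<Sum>j<k. F k f (h' j)) = (\<Sum>j<k. ennreal (C k f (h' j)))"
    using IH[OF f h'adm] by simp
  also have "\<dots> = ennreal (\<Sum>j<k. C k f (h' j))"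
    using C_nonneg[OF f] h'adm by (intro sum_ennreal) auto
  finally have E: "ennreal (- Cd) = F (Suc k) f h + ennreal (\<Sum>j<k. C k f (h' j))" unfolding lhs .
  have Cj: "C k f (h' j) = pochhammer r k * Phi f powr (-(r + real k)) * (Dn f (\<lambda>x. h j x * u x) * (\<Prod>i\<in>{..<k}-{j}. Dn f (h i)))"
    if j: "j < k" for j
  proof -
    have "(\<Prod>i<k. Dn f (h' j i)) = Dn f (h' j j) * (\<Prod>i\<in>{..<k}-{j}. Dn f (h' j i))"
      using j by (subst prod.remove[of _ j]) auto
    also have "(\<Prod>i\<in>{..<k}-{j}. Dn f (h' j i)) = (\<Prod>i\<in>{..<k}-{j}. Dn f (h i))"
      unfolding h'_def by (intro prod.cong) auto
    finally show ?thesis unfolding C_def h'_def by simp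
  qed
  have alg: "- Cd - (\<Sum>j<k. C k f (h' j)) = C (Suc k) f h"
  proof -
    have "(\<Sum>j<k. C k f (h' j)) = pochhammer r k * Phi f powr (-(r + real k)) * (\<Sum>j<k. Dn f (\<lambda>x. h j x * u x) * (\<Prod>i\<in>{..<k}-{j}. Dn f (h i)))"
      by (simp add: Cj sum_distrib_left)
    moreover have "C (Suc k) f h = pochhammer r k * (r + real k) * Phi f powr (-(r + real k) - 1) * (Dn f u * (\<Prod>j<k. Dn f (h j)))"
    proof -
      have e: "- (r + real (Suc k)) = -(r + real k) - 1" by simp
      show ?thesis unfolding C_def u_def e by (simp add: pochhammer_Suc algebra_simps)
    qed
    ultimately show ?thesis unfolding Cd_def by (simp add: sum_negf algebra_simps)
  qed
  have "F (Suc k) f h = ennreal (- Cd) - ennreal (\<Sum>j<k. C k f (h' j))"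
    unfolding E by simp
  also have "\<dots> = ennreal (- Cd - (\<Sum>j<k. C k f (h' j)))"
    using C_nonneg[OF f] h'adm by (intro ennreal_minus sum_nonneg) auto
  finally show ?thesis unfolding alg .
qed

theorem F_formula: "adm_f f \<Longrightarrow> \<forall>j<k. adm_h (h j) \<Longrightarrow> F k f h = ennreal (C k f h)"
proof (induction k arbitrary: f h)
  case 0 then show ?case using F0 by blast
next
  case (Suc k) then show ?case using step[of k f h] by blast
qed

end


lemma gamma_nn:
  fixes T :: real assumes T: "0 < T"
  shows "(\<integral>\<^sup>+t. ennreal (indicator {0<..} t * (t ^ m * exp (- t * T))) \<partial>lborel) = ennreal (fact m / T ^ Suc m)"
proof -
  let ?X = "(\<integral>\<^sup>+t. ennreal (indicator {0<..} t * (t ^ m * exp (- t * T))) \<partial>lborel)"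
  have "(\<integral>\<^sup>+t. ennreal (erlang_density 0 T t * t ^ m) \<partial>lborel) = ennreal (fact m / T ^ m)"
    using nn_integral_erlang_ith_moment[OF T, of 0 m] by simp
  moreover have "(\<integral>\<^sup>+t. ennreal (erlang_density 0 T t * t ^ m) \<partial>lborel) =
      (\<integral>\<^sup>+t. ennreal T * ennreal (indicator {0<..} t * (t ^ m * exp (- t * T))) \<partial>lborel)"
  proof (rule nn_integral_cong_AE)
    show "AE t in lborel. ennreal (erlang_density 0 T t * t ^ m) = ennreal T * ennreal (indicator {0<..} t * (t ^ m * exp (- t * T)))"
      using AE_lborel_singleton[of "0::real"]
    proof eventually_elim
      case (elim t)
      then show ?case using T
        by (cases "0 < t") (auto simp: erlang_density_def indicator_def ennreal_mult[symmetric] mult_ac)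
    qed
  qed
  moreover have "(\<integral>\<^sup>+t. ennreal T * ennreal (indicator {0<..} t * (t ^ m * exp (- t * T))) \<partial>lborel) = ennreal T * ?X"
    by (rule nn_integral_cmult) measurable
  ultimately have E: "ennreal T * ?X = ennreal (fact m / T ^ m)" by simp
  have "?X = ennreal (1 / T) * (ennreal T * ?X)"
    using T by (simp add: mult.assoc[symmetric] ennreal_mult[symmetric])
  also have "\<dots> = ennreal (fact m / T ^ Suc m)"
    unfolding E using T by (simp add: ennreal_mult[symmetric])
  finally show ?thesis .
qed

lemma inv_pow_gamma:
  fixes T :: real assumes T: "0 < T" and n: "0 < n"
  shows "ennreal (1 / T ^ n) = (\<integral>\<^sup>+t. indicator {0<..} t * ennreal (t ^ (n - 1) / fact (n - 1)) * ennreal (exp (- t * T)) \<partial>lborel)"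
proof -
  have "(\<integral>\<^sup>+t. indicator {0<..} t * ennreal (t ^ (n - 1) / fact (n - 1)) * ennreal (exp (- t * T)) \<partial>lborel)
      = (\<integral>\<^sup>+t. ennreal (1 / fact (n - 1)) * ennreal (indicator {0<..} t * (t ^ (n - 1) * exp (- t * T))) \<partial>lborel)"
    by (intro nn_integral_cong) (auto simp: indicator_def ennreal_mult[symmetric])
  also have "\<dots> = ennreal (1 / fact (n - 1)) * ennreal (fact (n - 1) / T ^ Suc (n - 1))"
    using gamma_nn[OF T, of "n - 1"] by (subst nn_integral_cmult) auto
  also have "\<dots> = ennreal (1 / fact (n - 1) * (fact (n - 1) / T ^ Suc (n - 1)))"
    using T by (subst ennreal_mult) auto
  also have "\<dots> = ennreal (1 / T ^ n)"
    using n by simp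
  finally show ?thesis ..
qed

lemma swap3:
  fixes G :: "'a \<Rightarrow> 'b \<Rightarrow> 'c \<Rightarrow> ennreal"
  assumes M: "sigma_finite_measure M" and N: "sigma_finite_measure N" and I: "countable I"
    and meas: "\<And>\<sigma>. \<sigma> \<in> I \<Longrightarrow> (\<lambda>(\<omega>, t). G \<omega> \<sigma> t) \<in> borel_measurable (M \<Otimes>\<^sub>M N)"
  shows "(\<integral>\<^sup>+\<omega>. \<integral>\<^sup>+\<sigma>. \<integral>\<^sup>+t. G \<omega> \<sigma> t \<partial>N \<partial>count_space I \<partial>M) = (\<integral>\<^sup>+t. \<integral>\<^sup>+\<omega>. \<integral>\<^sup>+\<sigma>. G \<omega> \<sigma> t \<partial>count_space I \<partial>M \<partial>N)"
proof -
  interpret MN: pair_sigma_finite M N by (intro pair_sigma_finite.intro M N)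
  have m1: "(\<lambda>\<omega>. \<integral>\<^sup>+t. G \<omega> \<sigma> t \<partial>N) \<in> borel_measurable M" if "\<sigma> \<in> I" for \<sigma>
    using MN.M2.borel_measurable_nn_integral[of "\<lambda>\<omega> t. G \<omega> \<sigma> t" M] meas[OF that] by simp
  have m2: "(\<lambda>t. \<integral>\<^sup>+\<omega>. G \<omega> \<sigma> t \<partial>M) \<in> borel_measurable N" if "\<sigma> \<in> I" for \<sigma>
  proof -
    have "(\<lambda>(t, \<omega>). G \<omega> \<sigma> t) \<in> borel_measurable (N \<Otimes>\<^sub>M M)"
      using meas[OF that] by (subst measurable_pair_swap_iff) simp
    then show ?thesis using MN.M1.borel_measurable_nn_integral[of "\<lambda>t \<omega>. G \<omega> \<sigma> t" N] by simp
  qed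
  have m3: "(\<lambda>\<omega>. G \<omega> \<sigma> t) \<in> borel_measurable M" if "\<sigma> \<in> I" "t \<in> space N" for \<sigma> t
    using measurable_Pair1[OF meas[OF that(1)] that(2)] by simp
  have "(\<integral>\<^sup>+\<omega>. \<integral>\<^sup>+\<sigma>. \<integral>\<^sup>+t. G \<omega> \<sigma> t \<partial>N \<partial>count_space I \<partial>M) = (\<integral>\<^sup>+\<sigma>. \<integral>\<^sup>+\<omega>. \<integral>\<^sup>+t. G \<omega> \<sigma> t \<partial>N \<partial>M \<partial>count_space I)"
    using m1 by (intro nn_integral_count_space_nn_integral I) auto
  also have "\<dots> = (\<integral>\<^sup>+\<sigma>. \<integral>\<^sup>+t. \<integral>\<^sup>+\<omega>. G \<omega> \<sigma> t \<partial>M \<partial>N \<partial>count_space I)"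
  proof (rule nn_integral_cong)
    fix \<sigma> assume "\<sigma> \<in> space (count_space I)"
    then have s: "\<sigma> \<in> I" by simp
    show "(\<integral>\<^sup>+\<omega>. \<integral>\<^sup>+t. G \<omega> \<sigma> t \<partial>N \<partial>M) = (\<integral>\<^sup>+t. \<integral>\<^sup>+\<omega>. G \<omega> \<sigma> t \<partial>M \<partial>N)"
      using MN.Fubini'[of "\<lambda>\<omega> t. G \<omega> \<sigma> t"] meas[OF s] by simp
  qed
  also have "\<dots> = (\<integral>\<^sup>+t. \<integral>\<^sup>+\<sigma>. \<integral>\<^sup>+\<omega>. G \<omega> \<sigma> t \<partial>M \<partial>count_space I \<partial>N)"
    using m2 by (intro nn_integral_count_space_nn_integral[symmetric] I) auto
  also have "\<dots> = (\<integral>\<^sup>+t. \<integral>\<^sup>+\<omega>. \<integral>\<^sup>+\<sigma>. G \<omega> \<sigma> t \<partial>count_space I \<partial>M \<partial>N)"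
  proof (rule nn_integral_cong)
    fix t assume t: "t \<in> space N"
    show "(\<integral>\<^sup>+\<sigma>. \<integral>\<^sup>+\<omega>. G \<omega> \<sigma> t \<partial>M \<partial>count_space I) = (\<integral>\<^sup>+\<omega>. \<integral>\<^sup>+\<sigma>. G \<omega> \<sigma> t \<partial>count_space I \<partial>M)"
      using m3[OF _ t] by (intro nn_integral_count_space_nn_integral[symmetric] I) auto
  qed
  finally show ?thesis .
qed

context NB begin

lemma adm_abs: "adm_h (\<lambda>x. \<bar>x\<bar>)"
  unfolding adm_h_def by auto

lemma adm_tabs: "0 \<le> t \<Longrightarrow> adm_f (\<lambda>x. t * \<bar>x\<bar>)"
  unfolding adm_f_def by (auto intro!: exI[of _ t])

lemma adm_pow: "0 < m \<Longrightarrow> adm_h (\<lambda>x. \<bar>x\<bar> ^ m)"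
  unfolding adm_h_def
proof (intro conjI allI impI)
  fix x :: real assume m: "0 < m" and x: "0 < x" "x \<le> 1"
  have "x ^ m \<le> x ^ 1" using x m by (intro power_decreasing) auto
  then show "\<bar>x\<bar> ^ m \<le> x" using x by simp
qed auto

lemma Phi_Psi: "Phi (\<lambda>x. t * \<bar>x\<bar>) = PsiPD \<alpha> t"
proof -
  have "(LINT x|lborel. (1 - exp (- (t * \<bar>x\<bar>))) * rho x) =
      (LINT x|lborel. \<alpha> * (indicator {0<..1} x *\<^sub>R ((1 - exp (- t * x)) * x powr (- \<alpha> - 1))))"
    by (rule Bochner_Integration.integral_cong[OF refl]) (auto simp: rho_def rhoPD_def indicator_def)
  also have "\<dots> = \<alpha> * (LINT x|lborel. indicator {0<..1} x *\<^sub>R ((1 - exp (- t * x)) * x powr (- \<alpha> - 1)))"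
    by (rule integral_mult_right_zero)
  finally show ?thesis unfolding Phi_def PsiPD_def set_lebesgue_integral_def by simp
qed

lemma Dn_nn:
  assumes t: "0 \<le> t" and m: "0 < m"
  shows "(\<integral>\<^sup>+x. ennreal (rhoPD \<alpha> x * x ^ m * exp (- t * x)) \<partial>lborel) = ennreal (Dn (\<lambda>x. t * \<bar>x\<bar>) (\<lambda>x. \<bar>x\<bar> ^ m))"
proof -
  have "(\<integral>\<^sup>+x. ennreal (exp (- (t * \<bar>x\<bar>)) * \<bar>x\<bar> ^ m * rho x) \<partial>lborel) = ennreal (Dn (\<lambda>x. t * \<bar>x\<bar>) (\<lambda>x. \<bar>x\<bar> ^ m))"
    unfolding Dn_def using int_Dn[OF adm_tabs[OF t] adm_pow[OF m]] rho_nonneg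
    by (intro nn_integral_eq_integral) auto
  moreover have "(\<integral>\<^sup>+x. ennreal (rhoPD \<alpha> x * x ^ m * exp (- t * x)) \<partial>lborel) = (\<integral>\<^sup>+x. ennreal (exp (- (t * \<bar>x\<bar>)) * \<bar>x\<bar> ^ m * rho x) \<partial>lborel)"
    by (intro nn_integral_cong) (auto simp: rho_def rhoPD_def mult_ac)
  ultimately show ?thesis by simp
qed

end


context NB begin

lemma LHS_red:
  assumes B: "blocks n k A" and k: "1 \<le> k"
  shows "(\<integral>\<^sup>+\<omega>. sample_partition_prob (\<lambda>i. J \<omega> i / (\<Sum>j. J \<omega> j)) n (A ` {..<k}) \<partial>M) =
    (\<integral>\<^sup>+t. indicator {0<..} t * ennreal (t ^ (n - 1) / fact (n - 1)) * ennreal (C k (\<lambda>x. t * \<bar>x\<bar>) (\<lambda>j x. \<bar>x\<bar> ^ card (A j))) \<partial>lborel)"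
proof -
  interpret blocks n k A by (rule B)
  define nj where "nj j = card (A j)" for j
  define hn where "hn = (\<lambda>j (x::real). \<bar>x\<bar> ^ nj j)"
  have nj_pos: "j < k \<Longrightarrow> 0 < nj j" for j unfolding nj_def by (rule card_pos)
  have n_pos: "0 < n"
  proof -
    have "0 < nj 0" using k nj_pos by simp
    also have "nj 0 \<le> (\<Sum>j<k. nj j)" using k by (intro member_le_sum) auto
    finally show ?thesis using sum_card unfolding nj_def by simp
  qed
  have hn_adm: "\<forall>j<k. adm_h (hn j)" unfolding hn_def using nj_pos adm_pow by auto
  define G where "G \<omega> \<sigma> t = indicator {0<..} t * ennreal (t ^ (n - 1) / fact (n - 1)) *
     (ennreal (exp (- t * NS (\<lambda>x. \<bar>x\<bar>) \<omega>)) * (\<Prod>j<k. ennreal (hn j (J \<omega> (\<sigma> j)))))" for \<omega> \<sigma> t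
  have step1: "(\<integral>\<^sup>+\<omega>. sample_partition_prob (\<lambda>i. J \<omega> i / (\<Sum>j. J \<omega> j)) n (A ` {..<k}) \<partial>M) =
     (\<integral>\<^sup>+\<omega>. \<integral>\<^sup>+\<sigma>. \<integral>\<^sup>+t. G \<omega> \<sigma> t \<partial>lborel \<partial>count_space (Inj k) \<partial>M)"
  proof (rule nn_integral_cong_AE)
    show "AE \<omega> in M. sample_partition_prob (\<lambda>i. J \<omega> i / (\<Sum>j. J \<omega> j)) n (A ` {..<k}) =
       (\<integral>\<^sup>+\<sigma>. \<integral>\<^sup>+t. G \<omega> \<sigma> t \<partial>lborel \<partial>count_space (Inj k))"
      using AE_Gd
    proof eventually_elim
      case (elim \<omega>)
      define T where "T = (\<Sum>j. J \<omega> j)"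
      have Jpos: "0 < J \<omega> i" for i using elim by (auto simp: Gd_def)
      have sm: "summable (J \<omega>)" using elim by (auto simp: Gd_def)
      have T: "0 < T" unfolding T_def using sm Jpos by (rule suminf_pos)
      have NSa: "NS (\<lambda>x. \<bar>x\<bar>) \<omega> = T"
        unfolding Nf_fin(4)[OF elim adm_abs] T_def using Jpos by (simp add: less_imp_le)
      show ?case unfolding spp_Inj T_def[symmetric]
      proof (rule nn_integral_cong)
        fix \<sigma>
        have "(\<Prod>j<k. ennreal (J \<omega> (\<sigma> j) / T) ^ card (A j)) = ennreal (\<Prod>j<k. (J \<omega> (\<sigma> j) / T) ^ nj j)"
          using T Jpos unfolding nj_def by (subst prod_ennreal[symmetric]) (auto simp: ennreal_power less_imp_le)
        also have "(\<Prod>j<k. (J \<omega> (\<sigma> j) / T) ^ nj j) = (\<Prod>j<k. J \<omega> (\<sigma> j) ^ nj j) * (1 / T ^ n)"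
        proof -
          have "(\<Prod>j<k. (J \<omega> (\<sigma> j) / T) ^ nj j) = (\<Prod>j<k. J \<omega> (\<sigma> j) ^ nj j) / (\<Prod>j<k. T ^ nj j)"
            by (simp add: power_divide prod_dividef)
          also have "(\<Prod>j<k. T ^ nj j) = T ^ n" unfolding nj_def power_sum[symmetric] sum_card ..
          finally show ?thesis by simp
        qed
        also have "ennreal \<dots> = ennreal (\<Prod>j<k. J \<omega> (\<sigma> j) ^ nj j) * ennreal (1 / T ^ n)"
          using T Jpos by (intro ennreal_mult prod_nonneg zero_le_power divide_nonneg_nonneg) (auto intro: less_imp_le)
        also have "\<dots> = ennreal (\<Prod>j<k. J \<omega> (\<sigma> j) ^ nj j) * (\<integral>\<^sup>+t. indicator {0<..} t * ennreal (t ^ (n - 1) / fact (n - 1)) * ennreal (exp (- t * T)) \<partial>lborel)"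
          unfolding inv_pow_gamma[OF T n_pos] ..
        also have "\<dots> = (\<integral>\<^sup>+t. ennreal (\<Prod>j<k. J \<omega> (\<sigma> j) ^ nj j) * (indicator {0<..} t * ennreal (t ^ (n - 1) / fact (n - 1)) * ennreal (exp (- t * T))) \<partial>lborel)"
          by (rule nn_integral_cmult[symmetric]) measurable
        also have "\<dots> = (\<integral>\<^sup>+t. G \<omega> \<sigma> t \<partial>lborel)"
        proof (rule nn_integral_cong)
          fix t
          have "(\<Prod>j<k. ennreal (hn j (J \<omega> (\<sigma> j)))) = ennreal (\<Prod>j<k. J \<omega> (\<sigma> j) ^ nj j)"
            unfolding hn_def using Jpos by (subst prod_ennreal) (auto simp: less_imp_le)
          then show "ennreal (\<Prod>j<k. J \<omega> (\<sigma> j) ^ nj j) * (indicator {0<..} t * ennreal (t ^ (n - 1) / fact (n - 1)) * ennreal (exp (- t * T))) = G \<omega> \<sigma> t"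
            unfolding G_def NSa by (simp add: mult_ac)
        qed
        finally show "(\<Prod>j<k. ennreal (J \<omega> (\<sigma> j) / T) ^ card (A j)) = (\<integral>\<^sup>+t. G \<omega> \<sigma> t \<partial>lborel)" .
      qed
    qed
  qed
  have Gm: "(\<lambda>(\<omega>, t). G \<omega> \<sigma> t) \<in> borel_measurable (M \<Otimes>\<^sub>M lborel)" for \<sigma>
    unfolding G_def hn_def by measurable
  have step2: "(\<integral>\<^sup>+\<omega>. \<integral>\<^sup>+\<sigma>. \<integral>\<^sup>+t. G \<omega> \<sigma> t \<partial>lborel \<partial>count_space (Inj k) \<partial>M) =
      (\<integral>\<^sup>+t. \<integral>\<^sup>+\<omega>. \<integral>\<^sup>+\<sigma>. G \<omega> \<sigma> t \<partial>count_space (Inj k) \<partial>M \<partial>lborel)"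
    by (rule swap3[OF sigma_finite_measure_axioms lborel.sigma_finite_measure_axioms countable_Inj Gm])
  have step3: "(\<integral>\<^sup>+\<omega>. \<integral>\<^sup>+\<sigma>. G \<omega> \<sigma> t \<partial>count_space (Inj k) \<partial>M) =
      indicator {0<..} t * ennreal (t ^ (n - 1) / fact (n - 1)) * ennreal (C k (\<lambda>x. t * \<bar>x\<bar>) (\<lambda>j x. \<bar>x\<bar> ^ card (A j)))" for t
  proof (cases "0 < t")
    case False
    then show ?thesis unfolding G_def by simp
  next
    case True
    define c where "c = indicator {0<..} t * ennreal (t ^ (n - 1) / fact (n - 1))"
    have Sm[measurable]: "S k hn \<in> borel_measurable M" unfolding hn_def by (intro S_meas) measurable
    have "(\<integral>\<^sup>+\<omega>. \<integral>\<^sup>+\<sigma>. G \<omega> \<sigma> t \<partial>count_space (Inj k) \<partial>M) =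
        (\<integral>\<^sup>+\<omega>. c * (ennreal (exp (- t * NS (\<lambda>x. \<bar>x\<bar>) \<omega>)) * S k hn \<omega>) \<partial>M)"
    proof (rule nn_integral_cong)
      fix \<omega>
      show "(\<integral>\<^sup>+\<sigma>. G \<omega> \<sigma> t \<partial>count_space (Inj k)) = c * (ennreal (exp (- t * NS (\<lambda>x. \<bar>x\<bar>) \<omega>)) * S k hn \<omega>)"
        unfolding G_def c_def[symmetric] S_def SW_def
        by (simp add: nn_integral_cmult mult.assoc)
    qed
    also have "\<dots> = c * (\<integral>\<^sup>+\<omega>. ennreal (exp (- t * NS (\<lambda>x. \<bar>x\<bar>) \<omega>)) * S k hn \<omega> \<partial>M)"
      using Sm by (intro nn_integral_cmult) measurable
    also have "(\<integral>\<^sup>+\<omega>. ennreal (exp (- t * NS (\<lambda>x. \<bar>x\<bar>) \<omega>)) * S k hn \<omega> \<partial>M) = F k (\<lambda>x. t * \<bar>x\<bar>) hn"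
      unfolding F_def
    proof (rule nn_integral_cong_AE)
      show "AE \<omega> in M. ennreal (exp (- t * NS (\<lambda>x. \<bar>x\<bar>) \<omega>)) * S k hn \<omega> = ennreal (Xp (\<lambda>x. t * \<bar>x\<bar>) \<omega>) * S k hn \<omega>"
        using AE_Gd
      proof eventually_elim
        case (elim \<omega>)
        have "Xp (\<lambda>x. 0 + t * \<bar>x\<bar>) \<omega> = Xp (\<lambda>_. 0) \<omega> * exp (- t * NS (\<lambda>x. \<bar>x\<bar>) \<omega>)"
          using True by (intro Xp_add[OF elim adm_abs]) auto
        moreover have "Xp (\<lambda>_. 0) \<omega> = 1" unfolding Xp_def Nf_def expneg_def by simp
        ultimately show ?case by simp
      qed
    qed
    also have "F k (\<lambda>x. t * \<bar>x\<bar>) hn = ennreal (C k (\<lambda>x. t * \<bar>x\<bar>) hn)"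
      using True by (intro F_formula adm_tabs hn_adm) auto
    finally show ?thesis unfolding c_def hn_def nj_def by simp
  qed
  show ?thesis unfolding step1 step2 step3 ..
qed

end


context NB begin

lemma RHS1:
  fixes g :: "real \<Rightarrow> real"
  assumes B: "blocks n k A" and k: "1 \<le> k"
    and g_meas[measurable]: "g \<in> borel_measurable borel"
    and g_nonneg: "\<And>x. 0 < x \<Longrightarrow> 0 \<le> g x"
    and g_laplace: "\<And>s. 0 \<le> s \<Longrightarrow>
        (\<integral>\<^sup>+x\<in>{0<..}. ennreal (exp (-s*x) * g x) \<partial>lborel) = ennreal (PsiPD \<alpha> s powr (-(r + real k)))"
  shows "ennreal (pochhammer r k) *
         (\<integral>\<^sup>+x\<in>({..<k} \<rightarrow>\<^sub>E {0<..}). (\<integral>\<^sup>+w\<in>{0<..}.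
             ennreal (g w * (\<Prod>i<k. rhoPD \<alpha> (x i) * x i ^ card (A i))
                       / (w + (\<Sum>i<k. x i)) ^ n) \<partial>lborel)
          \<partial>(PiM {..<k} (\<lambda>_. lborel)))
    = (\<integral>\<^sup>+t. indicator {0<..} t * ennreal (t ^ (n - 1) / fact (n - 1)) * ennreal (C k (\<lambda>x. t * \<bar>x\<bar>) (\<lambda>j x. \<bar>x\<bar> ^ card (A j))) \<partial>lborel)"
proof -
  interpret blocks n k A by (rule B)
  interpret PL: product_sigma_finite "\<lambda>_::nat. lborel::real measure" by standard
  define nj where "nj j = card (A j)" for j
  have nj_pos: "j < k \<Longrightarrow> 0 < nj j" for j unfolding nj_def by (rule card_pos)
  have n_pos: "0 < n"
  proof -
    have "0 < nj 0" using k nj_pos by simp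
    also have "nj 0 \<le> (\<Sum>j<k. nj j)" using k by (intro member_le_sum) auto
    finally show ?thesis using sum_card unfolding nj_def by simp
  qed
  let ?PM = "PiM {..<k} (\<lambda>_. lborel::real measure)"
  define At where "At t = indicator {0<..} t * ennreal (t ^ (n - 1) / fact (n - 1))" for t :: real
  define Bw where "Bw t w = ennreal (exp (- t * w) * g w) * indicator {0<..} w" for t w :: real
  define Xx where "Xx t x = (\<Prod>i<k. ennreal (rhoPD \<alpha> (x i) * x i ^ nj i * exp (- t * x i)))" for t :: real and x :: "nat \<Rightarrow> real"
  define H where "H x w t = At t * (Bw t w * Xx t x)" for x w t
  have Hm: "(\<lambda>p. H (fst (fst p)) (snd p) (snd (fst p))) \<in> borel_measurable ((?PM \<Otimes>\<^sub>M lborel) \<Otimes>\<^sub>M lborel)"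
    unfolding H_def At_def Bw_def Xx_def by measurable
  have Hm2: "(\<lambda>(w, t). H x w t) \<in> borel_measurable (lborel \<Otimes>\<^sub>M lborel)" for x
    unfolding H_def At_def Bw_def Xx_def by measurable
  interpret P2: pair_sigma_finite ?PM lborel
    by (intro pair_sigma_finite.intro PL.sigma_finite lborel.sigma_finite_measure_axioms) simp
  have Km: "(\<lambda>(x, t). \<integral>\<^sup>+w. H x w t \<partial>lborel) \<in> borel_measurable (?PM \<Otimes>\<^sub>M lborel)"
    using lborel.borel_measurable_nn_integral[of "\<lambda>(x, t) w. H x w t" "?PM \<Otimes>\<^sub>M lborel"] Hm
    by (simp add: split_beta')
  have Ktm: "(\<lambda>t. \<integral>\<^sup>+x. \<integral>\<^sup>+w. H x w t \<partial>lborel \<partial>?PM) \<in> borel_measurable lborel"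
  proof -
    have "(\<lambda>(t, x). \<integral>\<^sup>+w. H x w t \<partial>lborel) \<in> borel_measurable (lborel \<Otimes>\<^sub>M ?PM)"
      using Km by (subst measurable_pair_swap_iff) (simp add: split_beta')
    then show ?thesis using P2.M1.borel_measurable_nn_integral[of "\<lambda>t x. \<integral>\<^sup>+w. H x w t \<partial>lborel" lborel] by simp
  qed
  have a: "(\<integral>\<^sup>+w\<in>{0<..}. ennreal (g w * (\<Prod>i<k. rhoPD \<alpha> (x i) * x i ^ card (A i)) / (w + (\<Sum>i<k. x i)) ^ n) \<partial>lborel)
      * indicator ({..<k} \<rightarrow>\<^sub>E {0<..}) x = (\<integral>\<^sup>+w. \<integral>\<^sup>+t. H x w t \<partial>lborel \<partial>lborel)"
    if x: "x \<in> space ?PM" for x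
  proof (cases "x \<in> {..<k} \<rightarrow>\<^sub>E {0<..}")
    case False
    then obtain i where i: "i < k" "\<not> 0 < x i" using x by (auto simp: space_PiM PiE_def Pi_def)
    have "Xx t x = 0" for t
      unfolding Xx_def using i by (intro prod_zero bexI[of _ i]) (auto simp: rhoPD_def)
    then show ?thesis using False unfolding H_def by simp
  next
    case True
    then have xp: "0 < x i" if "i < k" for i using that by auto
    define P where "P = (\<Prod>i<k. rhoPD \<alpha> (x i) * x i ^ card (A i))"
    have P0: "0 \<le> P" unfolding P_def using xp alpha
      by (intro prod_nonneg mult_nonneg_nonneg) (auto simp: rhoPD_def less_imp_le)
    have "(\<integral>\<^sup>+w. ennreal (g w * P / (w + (\<Sum>i<k. x i)) ^ n) * indicator {0<..} w \<partial>lborel) = (\<integral>\<^sup>+w. \<integral>\<^sup>+t. H x w t \<partial>lborel \<partial>lborel)"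
    proof (rule nn_integral_cong)
      fix w :: real
      show "ennreal (g w * P / (w + (\<Sum>i<k. x i)) ^ n) * indicator {0<..} w = (\<integral>\<^sup>+t. H x w t \<partial>lborel)"
      proof (cases "0 < w")
        case False then show ?thesis unfolding H_def Bw_def by simp
      next
        case w: True
        define T where "T = w + (\<Sum>i<k. x i)"
        have T: "0 < T" unfolding T_def using w xp by (intro add_pos_nonneg sum_nonneg) (auto intro: less_imp_le)
        have gP: "0 \<le> g w * P" using g_nonneg[OF w] P0 by simp
        have "ennreal (g w * P / (w + (\<Sum>i<k. x i)) ^ n) * indicator {0<..} w = ennreal (g w * P) * ennreal (1 / T ^ n)"
          using w gP T unfolding T_def by (subst ennreal_mult[symmetric]) auto
        also have "\<dots> = ennreal (g w * P) * (\<integral>\<^sup>+t. indicator {0<..} t * ennreal (t ^ (n - 1) / fact (n - 1)) * ennreal (exp (- t * T)) \<partial>lborel)"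
          unfolding inv_pow_gamma[OF T n_pos] ..
        also have "\<dots> = (\<integral>\<^sup>+t. ennreal (g w * P) * (indicator {0<..} t * ennreal (t ^ (n - 1) / fact (n - 1)) * ennreal (exp (- t * T))) \<partial>lborel)"
          by (rule nn_integral_cmult[symmetric]) measurable
        also have "\<dots> = (\<integral>\<^sup>+t. H x w t \<partial>lborel)"
        proof (rule nn_integral_cong)
          fix t :: real
          have e: "exp (- t * T) = exp (- t * w) * (\<Prod>i<k. exp (- t * x i))"
            unfolding T_def by (simp add: exp_add[symmetric] exp_sum[symmetric] sum_negf distrib_left sum_distrib_left)
          have "Xx t x = ennreal (\<Prod>i<k. rhoPD \<alpha> (x i) * x i ^ nj i * exp (- t * x i))"
            unfolding Xx_def using xp alpha by (subst prod_ennreal) (auto simp: rhoPD_def less_imp_le)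
          also have "(\<Prod>i<k. rhoPD \<alpha> (x i) * x i ^ nj i * exp (- t * x i)) = P * (\<Prod>i<k. exp (- t * x i))"
            unfolding P_def nj_def by (simp add: prod.distrib)
          finally have X: "Xx t x = ennreal (P * (\<Prod>i<k. exp (- t * x i)))" .
          have "Bw t w * Xx t x = ennreal (g w * P * exp (- t * T))"
            unfolding Bw_def X e using w g_nonneg[OF w] P0
            by (simp add: ennreal_mult[symmetric] prod_nonneg mult_ac)
          then show "ennreal (g w * P) * (indicator {0<..} t * ennreal (t ^ (n - 1) / fact (n - 1)) * ennreal (exp (- t * T))) = H x w t"
          proof -
            have "ennreal (g w * P * exp (- t * T)) = ennreal (g w * P) * ennreal (exp (- t * T))"
              by (rule ennreal_mult[OF gP]) simp
            then show ?thesis unfolding H_def At_def using \<open>Bw t w * Xx t x = ennreal (g w * P * exp (- t * T))\<close>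
              by (simp only: mult_ac)
          qed
        qed
        finally show ?thesis unfolding T_def .
      qed
    qed
    then show ?thesis using True unfolding P_def by simp
  qed
  have "(\<integral>\<^sup>+x\<in>({..<k} \<rightarrow>\<^sub>E {0<..}). (\<integral>\<^sup>+w\<in>{0<..}. ennreal (g w * (\<Prod>i<k. rhoPD \<alpha> (x i) * x i ^ card (A i)) / (w + (\<Sum>i<k. x i)) ^ n) \<partial>lborel) \<partial>?PM)
     = (\<integral>\<^sup>+x. \<integral>\<^sup>+w. \<integral>\<^sup>+t. H x w t \<partial>lborel \<partial>lborel \<partial>?PM)"
    by (rule nn_integral_cong) (rule a)
  also have "\<dots> = (\<integral>\<^sup>+x. \<integral>\<^sup>+t. \<integral>\<^sup>+w. H x w t \<partial>lborel \<partial>lborel \<partial>?PM)"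
    by (intro nn_integral_cong lborel_pair.Fubini'[symmetric]) (use Hm2 in simp)
  also have "\<dots> = (\<integral>\<^sup>+t. \<integral>\<^sup>+x. \<integral>\<^sup>+w. H x w t \<partial>lborel \<partial>?PM \<partial>lborel)"
    using P2.Fubini'[of "\<lambda>x t. \<integral>\<^sup>+w. H x w t \<partial>lborel"] Km by (simp add: split_beta')
  finally have R0: "(\<integral>\<^sup>+x\<in>({..<k} \<rightarrow>\<^sub>E {0<..}). (\<integral>\<^sup>+w\<in>{0<..}. ennreal (g w * (\<Prod>i<k. rhoPD \<alpha> (x i) * x i ^ card (A i)) / (w + (\<Sum>i<k. x i)) ^ n) \<partial>lborel) \<partial>?PM)
     = (\<integral>\<^sup>+t. \<integral>\<^sup>+x. \<integral>\<^sup>+w. H x w t \<partial>lborel \<partial>?PM \<partial>lborel)" .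
  have cpt: "(\<integral>\<^sup>+x. \<integral>\<^sup>+w. H x w t \<partial>lborel \<partial>?PM) = At t * (ennreal (PsiPD \<alpha> t powr (-(r + real k))) * (\<Prod>i<k. ennreal (Dn (\<lambda>x. t * \<bar>x\<bar>) (\<lambda>x. \<bar>x\<bar> ^ nj i))))" for t
    proof (cases "0 < t")
      case False then show ?thesis unfolding H_def At_def by simp
    next
      case t: True
      have "(\<integral>\<^sup>+x. \<integral>\<^sup>+w. H x w t \<partial>lborel \<partial>?PM) = (\<integral>\<^sup>+x. (At t * (\<integral>\<^sup>+w. Bw t w \<partial>lborel)) * Xx t x \<partial>?PM)"
      proof (rule nn_integral_cong)
        fix x
        have "(\<integral>\<^sup>+w. H x w t \<partial>lborel) = (\<integral>\<^sup>+w. (At t * Xx t x) * Bw t w \<partial>lborel)"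
          unfolding H_def by (simp add: mult_ac)
        also have "\<dots> = (At t * Xx t x) * (\<integral>\<^sup>+w. Bw t w \<partial>lborel)"
          unfolding Bw_def by (rule nn_integral_cmult) measurable
        finally show "(\<integral>\<^sup>+w. H x w t \<partial>lborel) = (At t * (\<integral>\<^sup>+w. Bw t w \<partial>lborel)) * Xx t x"
          by (simp add: mult_ac)
      qed
      also have "\<dots> = (At t * (\<integral>\<^sup>+w. Bw t w \<partial>lborel)) * (\<integral>\<^sup>+x. Xx t x \<partial>?PM)"
        unfolding Xx_def by (rule nn_integral_cmult) measurable
      also have "(\<integral>\<^sup>+w. Bw t w \<partial>lborel) = ennreal (PsiPD \<alpha> t powr (-(r + real k)))"
        unfolding Bw_def using g_laplace[of t] t by simp
      also have "(\<integral>\<^sup>+x. Xx t x \<partial>?PM) = (\<Prod>i<k. \<integral>\<^sup>+y. ennreal (rhoPD \<alpha> y * y ^ nj i * exp (- t * y)) \<partial>lborel)"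
        unfolding Xx_def by (rule PL.product_nn_integral_prod) auto
      also have "\<dots> = (\<Prod>i<k. ennreal (Dn (\<lambda>x. t * \<bar>x\<bar>) (\<lambda>x. \<bar>x\<bar> ^ nj i)))"
        using t nj_pos by (intro prod.cong refl Dn_nn) auto
      finally show ?thesis by (simp add: mult_ac)
    qed
  have "ennreal (pochhammer r k) * (\<integral>\<^sup>+t. \<integral>\<^sup>+x. \<integral>\<^sup>+w. H x w t \<partial>lborel \<partial>?PM \<partial>lborel)
     = (\<integral>\<^sup>+t. ennreal (pochhammer r k) * (\<integral>\<^sup>+x. \<integral>\<^sup>+w. H x w t \<partial>lborel \<partial>?PM) \<partial>lborel)"
    by (rule nn_integral_cmult[symmetric, OF Ktm])
  also have "\<dots> = (\<integral>\<^sup>+t. ennreal (pochhammer r k) * (At t * (ennreal (PsiPD \<alpha> t powr (-(r + real k))) * (\<Prod>i<k. ennreal (Dn (\<lambda>x. t * \<bar>x\<bar>) (\<lambda>x. \<bar>x\<bar> ^ nj i))))) \<partial>lborel)"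
    unfolding cpt ..
  also have "\<dots> = (\<integral>\<^sup>+t. indicator {0<..} t * ennreal (t ^ (n - 1) / fact (n - 1)) * ennreal (C k (\<lambda>x. t * \<bar>x\<bar>) (\<lambda>j x. \<bar>x\<bar> ^ card (A j))) \<partial>lborel)"
  proof (rule nn_integral_cong)
    fix t :: real
    show "ennreal (pochhammer r k) * (At t * (ennreal (PsiPD \<alpha> t powr (-(r + real k))) * (\<Prod>i<k. ennreal (Dn (\<lambda>x. t * \<bar>x\<bar>) (\<lambda>x. \<bar>x\<bar> ^ nj i)))))
      = indicator {0<..} t * ennreal (t ^ (n - 1) / fact (n - 1)) * ennreal (C k (\<lambda>x. t * \<bar>x\<bar>) (\<lambda>j x. \<bar>x\<bar> ^ card (A j)))"
    proof (cases "0 < t")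
      case False then show ?thesis unfolding At_def by simp
    next
      case t: True
      have Dnn: "0 \<le> Dn (\<lambda>x. t * \<bar>x\<bar>) (\<lambda>x. \<bar>x\<bar> ^ nj i)" if "i < k" for i
        using t nj_pos[OF that] by (intro Dn_nonneg adm_tabs adm_pow) auto
      have "(\<Prod>i<k. ennreal (Dn (\<lambda>x. t * \<bar>x\<bar>) (\<lambda>x. \<bar>x\<bar> ^ nj i))) = ennreal (\<Prod>i<k. Dn (\<lambda>x. t * \<bar>x\<bar>) (\<lambda>x. \<bar>x\<bar> ^ nj i))"
        using Dnn by (intro prod_ennreal) auto
      moreover have "ennreal (C k (\<lambda>x. t * \<bar>x\<bar>) (\<lambda>j x. \<bar>x\<bar> ^ card (A j))) =
          ennreal (pochhammer r k) * (ennreal (PsiPD \<alpha> t powr (-(r + real k))) * ennreal (\<Prod>i<k. Dn (\<lambda>x. t * \<bar>x\<bar>) (\<lambda>x. \<bar>x\<bar> ^ nj i)))"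
      proof -
        have pn: "0 \<le> pochhammer r k" using r by (simp add: pochhammer_nonneg)
        have ps: "0 \<le> PsiPD \<alpha> t powr (-(r + real k))" by simp
        have pd: "0 \<le> (\<Prod>i<k. Dn (\<lambda>x. t * \<bar>x\<bar>) (\<lambda>x. \<bar>x\<bar> ^ nj i))" using Dnn by (intro prod_nonneg) auto
        have "ennreal (C k (\<lambda>x. t * \<bar>x\<bar>) (\<lambda>j x. \<bar>x\<bar> ^ card (A j))) =
           ennreal (pochhammer r k * (PsiPD \<alpha> t powr (-(r + real k)) * (\<Prod>i<k. Dn (\<lambda>x. t * \<bar>x\<bar>) (\<lambda>x. \<bar>x\<bar> ^ nj i))))"
          unfolding C_def Phi_Psi nj_def by (simp add: mult.assoc)
        also have "\<dots> = ennreal (pochhammer r k) * ennreal (PsiPD \<alpha> t powr (-(r + real k)) * (\<Prod>i<k. Dn (\<lambda>x. t * \<bar>x\<bar>) (\<lambda>x. \<bar>x\<bar> ^ nj i)))"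
          by (rule ennreal_mult[OF pn mult_nonneg_nonneg[OF ps pd]])
        also have "ennreal (PsiPD \<alpha> t powr (-(r + real k)) * (\<Prod>i<k. Dn (\<lambda>x. t * \<bar>x\<bar>) (\<lambda>x. \<bar>x\<bar> ^ nj i)))
           = ennreal (PsiPD \<alpha> t powr (-(r + real k))) * ennreal (\<Prod>i<k. Dn (\<lambda>x. t * \<bar>x\<bar>) (\<lambda>x. \<bar>x\<bar> ^ nj i))"
          by (rule ennreal_mult[OF ps pd])
        finally show ?thesis .
      qed
      ultimately show ?thesis unfolding At_def by (simp add: mult_ac)
    qed
  qed
  finally show ?thesis unfolding R0 .
qed

end


lemma PsiPD_meas[measurable]: "PsiPD a \<in> borel_measurable borel"
  unfolding PsiPD_def[abs_def] set_lebesgue_integral_def by measurable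

lemma Ginc_meas[measurable]: "Ginc a \<in> borel_measurable borel"
proof -
  have "Ginc a = (\<lambda>lam. (LINT x|lborel. (if 0 \<le> x \<and> x \<le> lam then 1 else 0) *\<^sub>R (x powr (a - 1) * exp (- x))) / Gamma a)"
    unfolding Ginc_def[abs_def] set_lebesgue_integral_def by (auto simp: indicator_def of_bool_def fun_eq_iff)
  also have "\<dots> \<in> borel_measurable borel" by measurable
  finally show ?thesis .
qed

lemma int_powr_exp:
  fixes a t :: real assumes a: "0 < a" and t: "0 \<le> t"
  shows "integrable lborel (\<lambda>y. indicator {0..t} y *\<^sub>R (y powr (a - 1) * exp (- y)))"
proof (rule Bochner_Integration.integrable_bound)
  have "(\<integral>\<^sup>+y. ennreal (indicator {0..t} y * y powr (a - 1)) \<partial>lborel) = ennreal (t powr (a - 1 + 1) / (a - 1 + 1))"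
    using has_integral_powr_from_0[of "a - 1" t] a t by (intro nn_integral_has_integral_lebesgue) auto
  then show "integrable lborel (\<lambda>y. indicator {0..t} y * y powr (a - 1))"
    by (intro integrableI_nonneg) auto
  show "(\<lambda>y. indicator {0..t} y *\<^sub>R (y powr (a - 1) * exp (- y))) \<in> borel_measurable lborel" by measurable
  show "AE y in lborel. norm (indicator {0..t} y *\<^sub>R (y powr (a - 1) * exp (- y))) \<le> norm (indicator {0..t} y * y powr (a - 1))"
  proof (rule AE_I2)
    fix y :: real
    show "norm (indicator {0..t} y *\<^sub>R (y powr (a - 1) * exp (- y))) \<le> norm (indicator {0..t} y * y powr (a - 1))"
    proof (cases "0 \<le> y \<and> y \<le> t")
      case True
      then have "exp (- y) \<le> 1" by simp
      then have "y powr (a - 1) * exp (- y) \<le> y powr (a - 1) * 1" by (intro mult_left_mono) auto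
      then show ?thesis using True by (simp add: indicator_def)
    qed (auto simp: indicator_def)
  qed
qed

context NB begin

lemma Dn_formula:
  assumes t: "0 < t" and m: "0 < m"
  shows "Dn (\<lambda>x. t * \<bar>x\<bar>) (\<lambda>x. \<bar>x\<bar> ^ m) = \<alpha> * t powr (\<alpha> - real m) * Gamma (real m - \<alpha>) * Ginc (real m - \<alpha>) t"
proof -
  define a where "a = real m - \<alpha>"
  have a: "0 < a" unfolding a_def using m alpha by linarith
  have "ennreal (Dn (\<lambda>x. t * \<bar>x\<bar>) (\<lambda>x. \<bar>x\<bar> ^ m)) = (\<integral>\<^sup>+x. ennreal (rhoPD \<alpha> x * x ^ m * exp (- t * x)) \<partial>lborel)"
    using Dn_nn[of t m] t m by simp
  also have "\<dots> = (\<integral>\<^sup>+x. ennreal \<alpha> * ennreal (indicator {0<..1} x * (x powr (a - 1) * exp (- t * x))) \<partial>lborel)"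
  proof (rule nn_integral_cong)
    fix x :: real
    show "ennreal (rhoPD \<alpha> x * x ^ m * exp (- t * x)) = ennreal \<alpha> * ennreal (indicator {0<..1} x * (x powr (a - 1) * exp (- t * x)))"
    proof (cases "0 < x \<and> x \<le> 1")
      case True
      have e: "- \<alpha> - 1 + real m = a - 1" unfolding a_def by simp
      have "x powr (- \<alpha> - 1) * x ^ m = x powr (a - 1)"
        using True by (simp add: powr_realpow[symmetric] powr_add[symmetric] e)
      then show ?thesis using True alpha
        by (simp add: rhoPD_def ennreal_mult[symmetric] mult_ac)
    qed (auto simp: rhoPD_def)
  qed
  also have "\<dots> = ennreal \<alpha> * (\<integral>\<^sup>+x. ennreal (indicator {0<..1} x * (x powr (a - 1) * exp (- t * x))) \<partial>lborel)"
    by (rule nn_integral_cmult) measurable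
  also have "(\<integral>\<^sup>+x. ennreal (indicator {0<..1} x * (x powr (a - 1) * exp (- t * x))) \<partial>lborel) =
      ennreal (1 / t) * (\<integral>\<^sup>+y. ennreal (indicator {0<..1} ((1 / t) * y) * (((1 / t) * y) powr (a - 1) * exp (- t * ((1 / t) * y)))) \<partial>lborel)"
    using nn_integral_real_affine[where c="1 / t" and t=0 and f="\<lambda>x. ennreal (indicator {0<..1} x * (x powr (a - 1) * exp (- t * x)))"] t
    by simp
  also have "(\<integral>\<^sup>+y. ennreal (indicator {0<..1} ((1 / t) * y) * (((1 / t) * y) powr (a - 1) * exp (- t * ((1 / t) * y)))) \<partial>lborel)
      = (\<integral>\<^sup>+y. ennreal (t powr (1 - a)) * ennreal (indicator {0..t} y *\<^sub>R (y powr (a - 1) * exp (- y))) \<partial>lborel)"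
  proof (rule nn_integral_cong)
    fix y :: real
    show "ennreal (indicator {0<..1} ((1 / t) * y) * (((1 / t) * y) powr (a - 1) * exp (- t * ((1 / t) * y)))) =
      ennreal (t powr (1 - a)) * ennreal (indicator {0..t} y *\<^sub>R (y powr (a - 1) * exp (- y)))"
    proof (cases "0 < y \<and> y \<le> t")
      case True
      have d: "(y / t) powr (a - 1) = y powr (a - 1) / t powr (a - 1)"
        using True t by (intro powr_divide)
      have i: "t powr (1 - a) = inverse (t powr (a - 1))"
        using powr_minus[of t "a - 1"] by simp
      have "((1 / t) * y) powr (a - 1) = t powr (1 - a) * y powr (a - 1)"
        using d unfolding i by (simp add: divide_inverse mult.commute)
      moreover have "indicator {0<..1} ((1 / t) * y) = (1::real)" using True t by (simp add: field_simps)
      ultimately show ?thesis using True t by (simp add: ennreal_mult[symmetric] mult_ac)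
    next
      case False
      then have "indicator {0<..1} ((1 / t) * y) = (0::real)" using t by (auto simp: field_simps indicator_def)
      moreover have "y \<notin> {0..t} \<or> y = 0" using False by auto
      ultimately show ?thesis by (auto simp: indicator_def)
    qed
  qed
  also have "\<dots> = ennreal (t powr (1 - a)) * (\<integral>\<^sup>+y. ennreal (indicator {0..t} y *\<^sub>R (y powr (a - 1) * exp (- y))) \<partial>lborel)"
    by (rule nn_integral_cmult) measurable
  also have "(\<integral>\<^sup>+y. ennreal (indicator {0..t} y *\<^sub>R (y powr (a - 1) * exp (- y))) \<partial>lborel) = ennreal (Gamma a * Ginc a t)"
  proof -
    have "(\<integral>\<^sup>+y. ennreal (indicator {0..t} y *\<^sub>R (y powr (a - 1) * exp (- y))) \<partial>lborel) =
        ennreal (LINT y|lborel. indicator {0..t} y *\<^sub>R (y powr (a - 1) * exp (- y)))"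
      using int_powr_exp[OF a, of t] t by (intro nn_integral_eq_integral) (auto simp: indicator_def)
    also have "(LINT y|lborel. indicator {0..t} y *\<^sub>R (y powr (a - 1) * exp (- y))) = Gamma a * Ginc a t"
      unfolding Ginc_def set_lebesgue_integral_def using Gamma_real_pos[OF a] by simp
    finally show ?thesis .
  qed
  finally have E: "ennreal (Dn (\<lambda>x. t * \<bar>x\<bar>) (\<lambda>x. \<bar>x\<bar> ^ m)) = ennreal \<alpha> * (ennreal (1 / t) * (ennreal (t powr (1 - a)) * ennreal (Gamma a * Ginc a t)))" .
  have Gi: "0 \<le> Ginc a t"
    unfolding Ginc_def set_lebesgue_integral_def using a
    by (intro divide_nonneg_pos integral_nonneg_AE AE_I2) (auto simp: indicator_def)
  have "ennreal \<alpha> * (ennreal (1 / t) * (ennreal (t powr (1 - a)) * ennreal (Gamma a * Ginc a t))) =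
      ennreal (\<alpha> * (1 / t * (t powr (1 - a) * (Gamma a * Ginc a t))))"
    using alpha t a Gi by (simp add: ennreal_mult[symmetric] less_imp_le)
  also have "\<alpha> * (1 / t * (t powr (1 - a) * (Gamma a * Ginc a t))) = \<alpha> * t powr (\<alpha> - real m) * Gamma (real m - \<alpha>) * Ginc (real m - \<alpha>) t"
  proof -
    have "1 / t * t powr (1 - a) = t powr (\<alpha> - real m)"
      using t unfolding a_def by (simp add: powr_diff powr_minus_divide[symmetric] divide_simps powr_add[symmetric])
    moreover have "\<alpha> * (1 / t * (t powr (1 - a) * (Gamma a * Ginc a t))) = \<alpha> * (1 / t * t powr (1 - a)) * Gamma a * Ginc a t"
      by (simp only: mult.assoc)
    ultimately show ?thesis unfolding a_def by simp
  qed
  finally have E2: "ennreal (Dn (\<lambda>x. t * \<bar>x\<bar>) (\<lambda>x. \<bar>x\<bar> ^ m)) = ennreal (\<alpha> * t powr (\<alpha> - real m) * Gamma (real m - \<alpha>) * Ginc (real m - \<alpha>) t)"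
    unfolding E .
  have "0 \<le> Dn (\<lambda>x. t * \<bar>x\<bar>) (\<lambda>x. \<bar>x\<bar> ^ m)" using t m by (intro Dn_nonneg adm_tabs adm_pow) auto
  moreover have "0 \<le> \<alpha> * t powr (\<alpha> - real m) * Gamma (real m - \<alpha>) * Ginc (real m - \<alpha>) t"
    using alpha a Gi unfolding a_def by (intro mult_nonneg_nonneg) (auto simp: less_imp_le)
  ultimately show ?thesis using E2 by simp
qed

end


lemma Ginc_nonneg: "0 < a \<Longrightarrow> 0 \<le> Ginc a t"
  unfolding Ginc_def set_lebesgue_integral_def
  by (intro divide_nonneg_pos integral_nonneg_AE AE_I2) (auto simp: indicator_def)

context NB begin

lemma RHS2:
  assumes B: "blocks n k A" and k: "1 \<le> k"
  shows "(\<integral>\<^sup>+t. indicator {0<..} t * ennreal (t ^ (n - 1) / fact (n - 1)) * ennreal (C k (\<lambda>x. t * \<bar>x\<bar>) (\<lambda>j x. \<bar>x\<bar> ^ card (A j))) \<partial>lborel)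
    = ennreal (\<alpha> ^ k * pochhammer r k / Gamma (real n)
                   * (\<Prod>i<k. Gamma (real (card (A i)) - \<alpha>))) *
         (\<integral>\<^sup>+t\<in>{0<..}. ennreal (t powr (real k * \<alpha> - 1) / PsiPD \<alpha> t powr (r + real k)
             * (\<Prod>i<k. Ginc (real (card (A i)) - \<alpha>) t)) \<partial>lborel)"
proof -
  interpret blocks n k A by (rule B)
  define nj where "nj j = card (A j)" for j
  have nj_pos: "j < k \<Longrightarrow> 0 < nj j" for j unfolding nj_def by (rule card_pos)
  have n_pos: "0 < n"
  proof -
    have "0 < nj 0" using k nj_pos by simp
    also have "nj 0 \<le> (\<Sum>j<k. nj j)" using k by (intro member_le_sum) auto
    finally show ?thesis using sum_card unfolding nj_def by simp
  qed
  have snj: "(\<Sum>j<k. nj j) = n" using sum_card unfolding nj_def .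
  have ai: "0 < real (nj i) - \<alpha>" if "i < k" for i using nj_pos[OF that] alpha by linarith
  define Kc where "Kc = \<alpha> ^ k * pochhammer r k / Gamma (real n) * (\<Prod>i<k. Gamma (real (nj i) - \<alpha>))"
  define ft where "ft t = t powr (real k * \<alpha> - 1) / PsiPD \<alpha> t powr (r + real k) * (\<Prod>i<k. Ginc (real (nj i) - \<alpha>) t)" for t
  have ftm[measurable]: "ft \<in> borel_measurable borel" unfolding ft_def by measurable
  have Gn: "Gamma (real n) = fact (n - 1)"
    using Gamma_fact[of "n - 1", where 'a=real] n_pos by (simp add: of_nat_diff)
  have Kc0: "0 \<le> Kc" unfolding Kc_def using alpha r n_pos ai
    by (intro mult_nonneg_nonneg divide_nonneg_pos prod_nonneg pochhammer_nonneg zero_le_power) (auto intro: less_imp_le)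
  have "ennreal Kc * (\<integral>\<^sup>+t\<in>{0<..}. ennreal (ft t) \<partial>lborel) = (\<integral>\<^sup>+t. ennreal Kc * (ennreal (ft t) * indicator {0<..} t) \<partial>lborel)"
    using ftm by (intro nn_integral_cmult[symmetric]) measurable
  also have "\<dots> = (\<integral>\<^sup>+t. indicator {0<..} t * ennreal (t ^ (n - 1) / fact (n - 1)) * ennreal (C k (\<lambda>x. t * \<bar>x\<bar>) (\<lambda>j x. \<bar>x\<bar> ^ card (A j))) \<partial>lborel)"
  proof (rule nn_integral_cong)
    fix t :: real
    show "ennreal Kc * (ennreal (ft t) * indicator {0<..} t) = indicator {0<..} t * ennreal (t ^ (n - 1) / fact (n - 1)) * ennreal (C k (\<lambda>x. t * \<bar>x\<bar>) (\<lambda>j x. \<bar>x\<bar> ^ card (A j)))"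
    proof (cases "0 < t")
      case False then show ?thesis by simp
    next
      case t: True
      define Psi where "Psi = PsiPD \<alpha> t"
      have Psi: "1 \<le> Psi" unfolding Psi_def Phi_Psi[symmetric] using t by (intro Phi_ge1 adm_tabs) auto
      have prodD: "(\<Prod>i<k. Dn (\<lambda>x. t * \<bar>x\<bar>) (\<lambda>x. \<bar>x\<bar> ^ nj i)) =
          \<alpha> ^ k * t powr (real k * \<alpha> - real n) * (\<Prod>i<k. Gamma (real (nj i) - \<alpha>)) * (\<Prod>i<k. Ginc (real (nj i) - \<alpha>) t)"
      proof -
        have "(\<Prod>i<k. Dn (\<lambda>x. t * \<bar>x\<bar>) (\<lambda>x. \<bar>x\<bar> ^ nj i)) =
            (\<Prod>i<k. \<alpha> * t powr (\<alpha> - real (nj i)) * Gamma (real (nj i) - \<alpha>) * Ginc (real (nj i) - \<alpha>) t)"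
          using t nj_pos by (intro prod.cong refl Dn_formula) auto
        also have "\<dots> = (\<Prod>i<k. \<alpha>) * (\<Prod>i<k. t powr (\<alpha> - real (nj i))) * (\<Prod>i<k. Gamma (real (nj i) - \<alpha>)) * (\<Prod>i<k. Ginc (real (nj i) - \<alpha>) t)"
          by (simp add: prod.distrib)
        also have "(\<Prod>i<k. t powr (\<alpha> - real (nj i))) = t powr (\<Sum>i<k. (\<alpha> - real (nj i)))"
          using t by (simp add: powr_sum)
        also have "(\<Sum>i<k. (\<alpha> - real (nj i))) = real k * \<alpha> - real n"
          using snj by (simp add: sum_subtractf of_nat_sum[symmetric])
        finally show ?thesis by simp
      qed
      have C: "C k (\<lambda>x. t * \<bar>x\<bar>) (\<lambda>j x. \<bar>x\<bar> ^ card (A j)) =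
          pochhammer r k * (1 / Psi powr (r + real k)) * (\<alpha> ^ k * t powr (real k * \<alpha> - real n) * (\<Prod>i<k. Gamma (real (nj i) - \<alpha>)) * (\<Prod>i<k. Ginc (real (nj i) - \<alpha>) t))"
      proof -
        have "C k (\<lambda>x. t * \<bar>x\<bar>) (\<lambda>j x. \<bar>x\<bar> ^ card (A j)) = pochhammer r k * Psi powr (-(r + real k)) * (\<Prod>j<k. Dn (\<lambda>x. t * \<bar>x\<bar>) (\<lambda>x. \<bar>x\<bar> ^ nj j))"
          unfolding C_def Phi_Psi Psi_def nj_def by simp
        then show ?thesis unfolding prodD powr_minus_divide by simp
      qed
      have tp: "t ^ (n - 1) * t powr (real k * \<alpha> - real n) = t powr (real k * \<alpha> - 1)"
      proof -
        have "t ^ (n - 1) = t powr real (n - 1)" using t by (simp add: powr_realpow)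
        then have "t ^ (n - 1) * t powr (real k * \<alpha> - real n) = t powr (real (n - 1) + (real k * \<alpha> - real n))"
          by (simp add: powr_add)
        also have "real (n - 1) + (real k * \<alpha> - real n) = real k * \<alpha> - 1" using n_pos by (simp add: of_nat_diff)
        finally show ?thesis .
      qed
      have eq: "t ^ (n - 1) / fact (n - 1) * C k (\<lambda>x. t * \<bar>x\<bar>) (\<lambda>j x. \<bar>x\<bar> ^ card (A j)) = Kc * ft t"
      proof -
        have "t ^ (n - 1) / fact (n - 1) * C k (\<lambda>x. t * \<bar>x\<bar>) (\<lambda>j x. \<bar>x\<bar> ^ card (A j)) =
          \<alpha> ^ k * pochhammer r k / fact (n - 1) * (\<Prod>i<k. Gamma (real (nj i) - \<alpha>)) *
            ((t ^ (n - 1) * t powr (real k * \<alpha> - real n)) / Psi powr (r + real k) * (\<Prod>i<k. Ginc (real (nj i) - \<alpha>) t))"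
          unfolding C by (simp add: field_simps)
        also have "\<dots> = Kc * ft t" unfolding tp Kc_def ft_def Gn Psi_def by simp
        finally show ?thesis .
      qed
      have ft0: "0 \<le> ft t" unfolding ft_def using t ai
        by (intro mult_nonneg_nonneg divide_nonneg_nonneg prod_nonneg Ginc_nonneg) auto
      have "ennreal Kc * (ennreal (ft t) * indicator {0<..} t) = ennreal (Kc * ft t)"
        using t Kc0 ft0 by (simp add: ennreal_mult)
      also have "\<dots> = ennreal (t ^ (n - 1) / fact (n - 1)) * ennreal (C k (\<lambda>x. t * \<bar>x\<bar>) (\<lambda>j x. \<bar>x\<bar> ^ card (A j)))"
      proof -
        have C0: "0 \<le> C k (\<lambda>x. t * \<bar>x\<bar>) (\<lambda>j x. \<bar>x\<bar> ^ card (A j))"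
          using t card_pos by (intro C_nonneg adm_tabs adm_pow) auto
        show ?thesis unfolding eq[symmetric] using t C0 by (intro ennreal_mult) auto
      qed
      finally show ?thesis using t by simp
    qed
  qed
  finally show ?thesis unfolding Kc_def ft_def nj_def by simp
qed

end


theorem theorem8p2:
  fixes \<alpha> r :: real
    and M :: "'a measure" and J :: "'a \<Rightarrow> nat \<Rightarrow> real"
    and g :: "real \<Rightarrow> real"
    and n k :: nat and A :: "nat \<Rightarrow> nat set"
  assumes alpha: "0 < \<alpha>" "\<alpha> < 1" and r: "0 < r"
    and M: "prob_space M"
    and J_meas: "\<And>i. (\<lambda>\<omega>. J \<omega> i) \<in> borel_measurable M"
    and J_ranked: "AE \<omega> in M. decseq (J \<omega>) \<and> (\<forall>i. 0 < J \<omega> i) \<and> summable (J \<omega>)"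
    and J_NB: "\<And>f. f \<in> borel_measurable borel \<Longrightarrow> (\<forall>x. 0 \<le> f x) \<Longrightarrow>
        (\<integral>\<^sup>+\<omega>. ennreal (expneg (\<Sum>i. ennreal (f (J \<omega> i)))) \<partial>M) = ennreal (NB_laplace \<alpha> r f)"
    and g_meas: "g \<in> borel_measurable borel"
    and g_nonneg: "\<And>x. 0 < x \<Longrightarrow> 0 \<le> g x"
    and g_prob: "(\<integral>\<^sup>+x\<in>{0<..}. ennreal (g x) \<partial>lborel) = 1"
    and g_laplace: "\<And>s. 0 \<le> s \<Longrightarrow>
        (\<integral>\<^sup>+x\<in>{0<..}. ennreal (exp (-s*x) * g x) \<partial>lborel) = ennreal (PsiPD \<alpha> s powr (-(r + real k)))"
    and k: "1 \<le> k"
    and A_ne: "\<And>i. i < k \<Longrightarrow> A i \<noteq> {}"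
    and A_disj: "\<And>i j. i < k \<Longrightarrow> j < k \<Longrightarrow> i \<noteq> j \<Longrightarrow> A i \<inter> A j = {}"
    and A_cover: "(\<Union>i<k. A i) = {1..n}"
  shows
    "(\<integral>\<^sup>+\<omega>. sample_partition_prob (\<lambda>i. J \<omega> i / (\<Sum>j. J \<omega> j)) n (A ` {..<k}) \<partial>M)
       = ennreal (pochhammer r k) *
         (\<integral>\<^sup>+x\<in>({..<k} \<rightarrow>\<^sub>E {0<..}). (\<integral>\<^sup>+w\<in>{0<..}.
             ennreal (g w * (\<Prod>i<k. rhoPD \<alpha> (x i) * x i ^ card (A i))
                       / (w + (\<Sum>i<k. x i)) ^ n) \<partial>lborel)
          \<partial>(PiM {..<k} (\<lambda>_. lborel)))
   \<and> (\<integral>\<^sup>+\<omega>. sample_partition_prob (\<lambda>i. J \<omega> i / (\<Sum>j. J \<omega> j)) n (A ` {..<k}) \<partial>M)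
       = ennreal (\<alpha> ^ k * pochhammer r k / Gamma (real n)
                   * (\<Prod>i<k. Gamma (real (card (A i)) - \<alpha>))) *
         (\<integral>\<^sup>+t\<in>{0<..}. ennreal (t powr (real k * \<alpha> - 1) / PsiPD \<alpha> t powr (r + real k)
             * (\<Prod>i<k. Ginc (real (card (A i)) - \<alpha>) t)) \<partial>lborel)"
proof -
  interpret N: NB M \<alpha> r J
    using M alpha r J_meas J_ranked J_NB by (intro NB.intro NB_axioms.intro) auto
  have B: "blocks n k A"
    using A_ne A_disj A_cover by (intro blocks.intro) auto
  show ?thesis
    using N.LHS_red[OF B k] N.RHS1[OF B k g_meas g_nonneg g_laplace] N.RHS2[OF B k] by simp
qed

end
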